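(* Let $\Phi:\{0,1\}^\omega\to\{0,1\}^\omega$ be a computable injection and let $b$ be a computable $\Phi$-martingale. Then for every $\sigma$ the limit $$b'(\sigma)=\lim_{n\to\infty}\sum_{\tau\in\{0,1\}^n} b(\tau)\,\frac{\mu([\sigma]\cap\Phi^{-1}([\tau]))}{\mu([\sigma])}$$ exists, and $b'$ is a total computable martingale (with respect to $\mu$).
   Context: $\mu$ is the uniform (fair-coin) measure on $\{0,1\}^\omega$ and $[\tau]$ the set of sequences extending $\tau$. For a computable $\Phi$, a $\Phi$-martingale is a function $b:\{0,1\}^{<\omega}\to\mathbb{R}_{\ge0}$ with $b(\tau)\mu(\Phi^{-1}[\tau])=b(\tau0)\mu(\Phi^{-1}[\tau0])+b(\tau1)\mu(\Phi^{-1}[\tau1])$ for all $\tau$; it is computable if $b(\tau)$ is a computable real uniformly in $\tau$. A (total) martingale is $m:\{0,1\}^{<\omega}\to\mathbb{R}_{\ge0}$ with $m(\sigma0)+m(\sigma1)=2m(\sigma)$. *)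

theory Defs
  imports "HOL-Probability.Probability" "HOL-Library.Nat_Bijection"
begin

datatype recf = Z | S | Proj nat | Cn recf "recf list" | Pr recf recf | Mn recf

inductive eval :: "recf \<Rightarrow> nat list \<Rightarrow> nat \<Rightarrow> bool" where
  eval_Z: "eval Z xs 0"
| eval_S: "eval S (x # xs) (Suc x)"
| eval_Proj: "i < length xs \<Longrightarrow> eval (Proj i) xs (xs ! i)"
| eval_Cn: "list_all2 (\<lambda>g y. eval g xs y) gs ys \<Longrightarrow> eval f ys z \<Longrightarrow> eval (Cn f gs) xs z"
| eval_Pr0: "eval f xs z \<Longrightarrow> eval (Pr f g) (0 # xs) z"
| eval_PrS: "eval (Pr f g) (n # xs) y \<Longrightarrow> eval g (n # y # xs) z \<Longrightarrow> eval (Pr f g) (Suc n # xs) z"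
| eval_Mn: "eval f (n # xs) 0 \<Longrightarrow> (\<forall>m<n. \<exists>y. eval f (m # xs) (Suc y)) \<Longrightarrow> eval (Mn f) xs n"

definition computable_nat :: "(nat \<Rightarrow> nat) \<Rightarrow> bool" where
  "computable_nat h \<longleftrightarrow> (\<exists>f. \<forall>n. eval f [n] (h n))"

definition code_str :: "bool list \<Rightarrow> nat" where
  "code_str \<sigma> = list_encode (map of_bool \<sigma>)"

definition rat_decode :: "nat \<Rightarrow> real" where
  "rat_decode n = (case prod_decode n of (a, b) \<Rightarrow> of_int (int_decode a) / real (Suc b))"

definition computable_strfun :: "(bool list \<Rightarrow> real) \<Rightarrow> bool" where
  "computable_strfun b \<longleftrightarrow> (\<exists>a. computable_nat a \<and>
     (\<forall>\<tau> k. \<bar>rat_decode (a (prod_encode (code_str \<tau>, k))) - b \<tau>\<bar> \<le> 1 / 2 ^ k))"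

definition init_seg :: "(nat \<Rightarrow> bool) \<Rightarrow> nat \<Rightarrow> bool list" where
  "init_seg X k = map X [0..<k]"

text \<open>Computable (total) maps of Cantor space: the n-th output bit is computed from a finite
  initial segment of the input; output 0/1 means the bit, anything else means "not yet".\<close>
definition computable_cantor :: "((nat \<Rightarrow> bool) \<Rightarrow> (nat \<Rightarrow> bool)) \<Rightarrow> bool" where
  "computable_cantor \<Phi> \<longleftrightarrow> (\<exists>h. computable_nat h \<and>
     (\<forall>X n. (\<exists>k. h (prod_encode (code_str (init_seg X k), n)) < 2) \<and>
            (\<forall>k. h (prod_encode (code_str (init_seg X k), n)) < 2 \<longrightarrow>
                 h (prod_encode (code_str (init_seg X k), n)) = of_bool (\<Phi> X n))))"

definition cantor :: "(nat \<Rightarrow> bool) measure" where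
  "cantor = PiM UNIV (\<lambda>_. measure_pmf (pmf_of_set (UNIV :: bool set)))"

definition cyl :: "bool list \<Rightarrow> (nat \<Rightarrow> bool) set" where
  "cyl \<tau> = {X. \<forall>i<length \<tau>. X i = \<tau> ! i}"

definition mu :: "(nat \<Rightarrow> bool) set \<Rightarrow> real" where
  "mu A = measure cantor A"

definition Phi_martingale :: "((nat \<Rightarrow> bool) \<Rightarrow> (nat \<Rightarrow> bool)) \<Rightarrow> (bool list \<Rightarrow> real) \<Rightarrow> bool" where
  "Phi_martingale \<Phi> b \<longleftrightarrow> (\<forall>\<tau>. b \<tau> \<ge> 0) \<and>
     (\<forall>\<tau>. b \<tau> * mu (\<Phi> -` cyl \<tau>) =
           b (\<tau> @ [False]) * mu (\<Phi> -` cyl (\<tau> @ [False])) + b (\<tau> @ [True]) * mu (\<Phi> -` cyl (\<tau> @ [True])))"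

definition martingale :: "(bool list \<Rightarrow> real) \<Rightarrow> bool" where
  "martingale m \<longleftrightarrow> (\<forall>\<sigma>. m \<sigma> \<ge> 0) \<and> (\<forall>\<sigma>. m (\<sigma> @ [False]) + m (\<sigma> @ [True]) = 2 * m \<sigma>)"

end

theory Submission
  imports Defs
begin

abbreviation "Mc \<equiv> (\<lambda>_::nat. measure_pmf (pmf_of_set (UNIV :: bool set)))"

lemma space_cantor[simp]: "space cantor = UNIV"
  by (simp add: cantor_def space_PiM)

lemma prob_cantor: "prob_space cantor"
  unfolding cantor_def by (rule prob_space_PiM) (simp add: prob_space_measure_pmf)

interpretation C: prob_space cantor by (rule prob_cantor)

lemma cyl_emb: "cyl \<rho> = prod_emb UNIV Mc {..<length \<rho>} (PiE {..<length \<rho>} (\<lambda>i. {\<rho>!i}))"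
  by (rule set_eqI) (simp add: cyl_def prod_emb_def space_PiM restrict_PiE_iff Pi_iff Ball_def)

lemma cyl_sets[simp]: "cyl \<rho> \<in> sets cantor"
  unfolding cyl_emb cantor_def by (rule sets_PiM_I) auto


lemma mu_cyl: "mu (cyl \<rho>) = 1 / 2 ^ length \<rho>"
proof -
  have "emeasure cantor (cyl \<rho>) = (\<Prod>i\<in>{..<length \<rho>}. emeasure (Mc i) {\<rho>!i})"
    unfolding cyl_emb cantor_def
    by (rule emeasure_PiM_emb) (auto simp: prob_space_measure_pmf)
  also have "\<dots> = (\<Prod>i\<in>{..<length \<rho>}. ennreal (1/2))"
    by (intro prod.cong refl) (simp add: emeasure_pmf_single)
  also have "\<dots> = ennreal ((1/2) ^ length \<rho>)"
    by (simp only: prod_constant card_lessThan) (rule ennreal_power, simp)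
  finally have "ennreal (mu (cyl \<rho>)) = ennreal ((1/2) ^ length \<rho>)"
    unfolding mu_def C.emeasure_eq_measure .
  then have "mu (cyl \<rho>) = (1/2) ^ length \<rho>"
    by (subst (asm) ennreal_inj) (auto simp: mu_def)
  then show ?thesis by (simp add: power_divide)
qed

lemma init_seg_length[simp]: "length (init_seg X k) = k"
  by (simp add: init_seg_def)

lemma cyl_iff: "X \<in> cyl \<rho> \<longleftrightarrow> init_seg X (length \<rho>) = \<rho>"
proof -
  have "init_seg X (length \<rho>) = \<rho> \<longleftrightarrow> (\<forall>i<length \<rho>. X i = \<rho>!i)"
    unfolding init_seg_def by (subst list_eq_iff_nth_eq) simp
  then show ?thesis by (simp add: cyl_def)
qed

lemma cyl_disj:
  assumes "length \<rho> = length \<rho>'" "\<rho> \<noteq> \<rho>'"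
  shows "cyl \<rho> \<inter> cyl \<rho>' = {}"
  using assms by (auto simp: cyl_iff)

lemma mu_union:
  assumes "finite R" "\<And>\<rho>. \<rho> \<in> R \<Longrightarrow> length \<rho> = L"
  shows "mu (\<Union>\<rho>\<in>R. cyl \<rho>) = card R / 2 ^ L"
proof -
  have "mu (\<Union>\<rho>\<in>R. cyl \<rho>) = (\<Sum>\<rho>\<in>R. mu (cyl \<rho>))"
    unfolding mu_def
  proof (rule C.finite_measure_finite_Union)
    show "finite R" by fact
    show "cyl ` R \<subseteq> C.events" by auto
    show "disjoint_family_on cyl R"
      unfolding disjoint_family_on_def
    proof (intro ballI impI)
      fix \<rho> \<rho>' assume "\<rho> \<in> R" "\<rho>' \<in> R" "\<rho> \<noteq> \<rho>'"
      then show "cyl \<rho> \<inter> cyl \<rho>' = {}" using assms(2) by (intro cyl_disj) auto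
    qed
  qed
  also have "\<dots> = (\<Sum>\<rho>\<in>R. 1 / 2 ^ L)"
    by (intro sum.cong refl) (simp add: mu_cyl assms)
  finally show ?thesis by simp
qed

lemma cyl_append_split: "cyl \<sigma> = cyl (\<sigma> @ [False]) \<union> cyl (\<sigma> @ [True])"
proof (rule set_eqI)
  fix X
  have "init_seg X (Suc (length \<sigma>)) = init_seg X (length \<sigma>) @ [X (length \<sigma>)]"
    by (simp add: init_seg_def)
  then show "X \<in> cyl \<sigma> \<longleftrightarrow> X \<in> cyl (\<sigma> @ [False]) \<union> cyl (\<sigma> @ [True])"
    by (cases "X (length \<sigma>)") (auto simp: cyl_iff)
qed

lemma mu_split:
  assumes "B \<in> sets cantor"
  shows "mu (cyl \<sigma> \<inter> B) = mu (cyl (\<sigma> @ [False]) \<inter> B) + mu (cyl (\<sigma> @ [True]) \<inter> B)"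
proof -
  have "cyl \<sigma> \<inter> B = (cyl (\<sigma> @ [False]) \<inter> B) \<union> (cyl (\<sigma> @ [True]) \<inter> B)"
    using cyl_append_split[of \<sigma>] by blast
  moreover have "cyl (\<sigma> @ [False]) \<inter> cyl (\<sigma> @ [True]) = {}"
    by (rule cyl_disj) auto
  then have d: "(cyl (\<sigma> @ [False]) \<inter> B) \<inter> (cyl (\<sigma> @ [True]) \<inter> B) = {}" by blast
  ultimately show ?thesis unfolding mu_def
    using C.finite_measure_Union[OF sets.Int[OF cyl_sets assms] sets.Int[OF cyl_sets assms] d]
    by simp
qed


definition recfn :: "nat \<Rightarrow> (nat list \<Rightarrow> nat) \<Rightarrow> bool" where
  "recfn k f \<longleftrightarrow> (\<exists>r. \<forall>xs. length xs = k \<longrightarrow> eval r xs (f xs))"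

lemma recfn_cong: "recfn k f \<Longrightarrow> (\<And>xs. length xs = k \<Longrightarrow> f xs = g xs) \<Longrightarrow> recfn k g"
  unfolding recfn_def by metis

lemma recfn_Z: "recfn k (\<lambda>_. 0)"
  unfolding recfn_def using eval_Z by blast

lemma recfn_proj: "i < k \<Longrightarrow> recfn k (\<lambda>xs. xs ! i)"
  unfolding recfn_def using eval_Proj by auto

lemma len1: "length xs = Suc 0 \<Longrightarrow> xs = [hd xs]"
  by (cases xs) auto

lemma hd0: "length xs = Suc 0 \<Longrightarrow> hd xs = xs ! 0"
  by (cases xs) auto

lemma hd0': "0 < length xs \<Longrightarrow> hd xs = xs ! 0"
  by (cases xs) auto

lemmas nums = numeral_2_eq_2 numeral_3_eq_3 One_nat_def

lemma recfn_S: "recfn 1 (\<lambda>xs. Suc (hd xs))"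
  unfolding recfn_def
proof (intro exI allI impI)
  fix xs :: "nat list" assume "length xs = 1"
  then have "xs = [hd xs]" by (intro len1) simp
  then show "eval S xs (Suc (hd xs))" by (metis eval_S)
qed

lemma recfn_Cn1: "recfn 1 f \<Longrightarrow> recfn k g \<Longrightarrow> recfn k (\<lambda>xs. f [g xs])"
proof -
  assume "recfn 1 f" "recfn k g"
  then obtain rf rg where f: "\<And>xs. length xs = 1 \<Longrightarrow> eval rf xs (f xs)"
    and g: "\<And>xs. length xs = k \<Longrightarrow> eval rg xs (g xs)" unfolding recfn_def by blast
  show ?thesis unfolding recfn_def
    by (rule exI[of _ "Cn rf [rg]"]) (auto intro!: eval_Cn f g)
qed

lemma recfn_Cn2: "recfn 2 f \<Longrightarrow> recfn k g \<Longrightarrow> recfn k h \<Longrightarrow> recfn k (\<lambda>xs. f [g xs, h xs])"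
proof -
  assume "recfn 2 f" "recfn k g" "recfn k h"
  then obtain rf rg rh where f: "\<And>xs. length xs = 2 \<Longrightarrow> eval rf xs (f xs)"
    and g: "\<And>xs. length xs = k \<Longrightarrow> eval rg xs (g xs)"
    and h: "\<And>xs. length xs = k \<Longrightarrow> eval rh xs (h xs)" unfolding recfn_def by blast
  show ?thesis unfolding recfn_def
    by (rule exI[of _ "Cn rf [rg, rh]"]) (auto intro!: eval_Cn f g h)
qed

lemma recfn_Cn3: "recfn 3 f \<Longrightarrow> recfn k g \<Longrightarrow> recfn k h \<Longrightarrow> recfn k u \<Longrightarrow>
   recfn k (\<lambda>xs. f [g xs, h xs, u xs])"
proof -
  assume "recfn 3 f" "recfn k g" "recfn k h" "recfn k u"
  then obtain rf rg rh ru where f: "\<And>xs. length xs = 3 \<Longrightarrow> eval rf xs (f xs)"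
    and g: "\<And>xs. length xs = k \<Longrightarrow> eval rg xs (g xs)"
    and h: "\<And>xs. length xs = k \<Longrightarrow> eval rh xs (h xs)"
    and u: "\<And>xs. length xs = k \<Longrightarrow> eval ru xs (u xs)" unfolding recfn_def by blast
  show ?thesis unfolding recfn_def
    by (rule exI[of _ "Cn rf [rg, rh, ru]"]) (auto intro!: eval_Cn f g h u)
qed

lemma recfn_Pr:
  assumes "recfn k f" "recfn (Suc (Suc k)) g"
  shows "recfn (Suc k) (\<lambda>xs. rec_nat (f (tl xs)) (\<lambda>n y. g (n # y # tl xs)) (hd xs))"
proof -
  obtain rf rg where f: "\<And>xs. length xs = k \<Longrightarrow> eval rf xs (f xs)"
    and g: "\<And>xs. length xs = Suc (Suc k) \<Longrightarrow> eval rg xs (g xs)"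
    using assms unfolding recfn_def by blast
  have *: "eval (Pr rf rg) (n # ys) (rec_nat (f ys) (\<lambda>n y. g (n # y # ys)) n)"
    if "length ys = k" for n ys
  proof (induction n)
    case 0 then show ?case using f that by (auto intro: eval_Pr0)
  next
    case (Suc n) then show ?case using g that by (auto intro: eval_PrS)
  qed
  show ?thesis unfolding recfn_def
  proof (intro exI allI impI)
    fix xs :: "nat list" assume "length xs = Suc k"
    then obtain n ys where "xs = n # ys" "length ys = k" by (cases xs) auto
    then show "eval (Pr rf rg) xs (rec_nat (f (tl xs)) (\<lambda>n y. g (n # y # tl xs)) (hd xs))"
      using * by simp
  qed
qed

lemma recfn_Mn:
  assumes "recfn (Suc k) f" "\<And>xs. length xs = k \<Longrightarrow> \<exists>n. f (n # xs) = 0"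
  shows "recfn k (\<lambda>xs. LEAST n. f (n # xs) = 0)"
proof -
  obtain rf where f: "\<And>xs. length xs = Suc k \<Longrightarrow> eval rf xs (f xs)"
    using assms unfolding recfn_def by blast
  show ?thesis unfolding recfn_def
  proof (intro exI allI impI)
    fix xs :: "nat list" assume l: "length xs = k"
    define n where "n = (LEAST n. f (n # xs) = 0)"
    have n0: "f (n # xs) = 0" unfolding n_def using assms(2)[OF l] by (rule LeastI_ex)
    have "\<forall>m<n. \<exists>y. eval rf (m # xs) (Suc y)"
    proof (intro allI impI)
      fix m assume "m < n"
      then have "f (m # xs) \<noteq> 0" unfolding n_def by (rule not_less_Least)
      then obtain y where "f (m # xs) = Suc y" by (cases "f (m # xs)") auto
      then show "\<exists>y. eval rf (m # xs) (Suc y)" using f[of "m # xs"] l by auto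
    qed
    then show "eval (Mn rf) xs n" using f[of "n # xs"] l n0 by (auto intro: eval_Mn)
  qed
qed

abbreviation pfst :: "nat \<Rightarrow> nat" where "pfst p \<equiv> fst (prod_decode p)"
abbreviation psnd :: "nat \<Rightarrow> nat" where "psnd p \<equiv> snd (prod_decode p)"

lemma cn_recfn: "computable_nat f \<longleftrightarrow> recfn 1 (\<lambda>xs. f (hd xs))"
proof
  assume "computable_nat f"
  then obtain r where "\<And>n. eval r [n] (f n)" unfolding computable_nat_def by blast
  then show "recfn 1 (\<lambda>xs. f (hd xs))" unfolding recfn_def
    by (metis One_nat_def len1)
next
  assume "recfn 1 (\<lambda>xs. f (hd xs))"
  then obtain r where "\<And>xs. length xs = 1 \<Longrightarrow> eval r xs (f (hd xs))" unfolding recfn_def by blast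
  then show "computable_nat f" unfolding computable_nat_def
    by (metis One_nat_def length_Cons list.sel(1) list.size(3))
qed

definition comp2 :: "(nat \<Rightarrow> nat \<Rightarrow> nat) \<Rightarrow> bool" where
  "comp2 F \<longleftrightarrow> recfn 2 (\<lambda>xs. F (xs!0) (xs!1))"
definition comp3 :: "(nat \<Rightarrow> nat \<Rightarrow> nat \<Rightarrow> nat) \<Rightarrow> bool" where
  "comp3 F \<longleftrightarrow> recfn 3 (\<lambda>xs. F (xs!0) (xs!1) (xs!2))"

lemma recfn_comp1: "computable_nat f \<Longrightarrow> recfn k g \<Longrightarrow> recfn k (\<lambda>xs. f (g xs))"
  unfolding cn_recfn by (drule (1) recfn_Cn1) simp

lemma recfn_comp2: "comp2 F \<Longrightarrow> recfn k g \<Longrightarrow> recfn k h \<Longrightarrow> recfn k (\<lambda>xs. F (g xs) (h xs))"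
  unfolding comp2_def by (drule (2) recfn_Cn2) simp

lemma recfn_comp3: "comp3 F \<Longrightarrow> recfn k g \<Longrightarrow> recfn k h \<Longrightarrow> recfn k u \<Longrightarrow>
   recfn k (\<lambda>xs. F (g xs) (h xs) (u xs))"
  unfolding comp3_def by (drule (3) recfn_Cn3) simp

lemma recfn_const: "recfn k (\<lambda>_. c)"
proof (induction c)
  case 0 show ?case by (rule recfn_Z)
next
  case (Suc c)
  have "recfn k (\<lambda>xs. (\<lambda>ys. Suc (hd ys)) [c])" by (rule recfn_Cn1[OF recfn_S Suc])
  then show ?case by simp
qed

lemma recfn_Suc: "recfn k g \<Longrightarrow> recfn k (\<lambda>xs. Suc (g xs))"
  by (drule recfn_Cn1[OF recfn_S]) simp

lemma cn_id: "computable_nat (\<lambda>x. x)"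
  unfolding cn_recfn by (rule recfn_cong[OF recfn_proj[of 0]]) (auto simp: hd0)

lemma cn_recfn1: "recfn 1 (\<lambda>xs. f (xs!0)) \<Longrightarrow> computable_nat f"
  unfolding cn_recfn by (erule recfn_cong) (simp add: hd0)

lemma comp2_rec:
  assumes "computable_nat a" "comp3 St"
  shows "comp2 (\<lambda>n x. rec_nat (a x) (\<lambda>m y. St m y x) n)"
proof -
  have f: "recfn 1 (\<lambda>xs. a (xs!0))" using assms(1) unfolding cn_recfn
    by (rule recfn_cong) (metis len1 One_nat_def nth_Cons_0)
  have g: "recfn 3 (\<lambda>xs. St (xs!0) (xs!1) (xs!2))" using assms(2) unfolding comp3_def .
  have "recfn 2 (\<lambda>xs. rec_nat (a (tl xs ! 0)) (\<lambda>n y. St ((n # y # tl xs)!0) ((n # y # tl xs)!1) ((n # y # tl xs)!2)) (hd xs))"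
    using recfn_Pr[OF f, of "\<lambda>xs. St (xs!0) (xs!1) (xs!2)"] g by (simp add: nums)
  then show ?thesis unfolding comp2_def
    by (rule recfn_cong) (auto simp: hd0' nth_tl)
qed

lemma recfn_rec0:
  assumes "recfn 2 g"
  shows "computable_nat (\<lambda>n. rec_nat c (\<lambda>m y. g [m, y]) n)"
proof -
  have "recfn 1 (\<lambda>xs. rec_nat ((\<lambda>_. c) (tl xs)) (\<lambda>n y. g (n # y # tl xs)) (hd xs))"
    using recfn_Pr[OF recfn_const[of 0 c], of g] assms by (simp add: numeral_2_eq_2)
  then show ?thesis unfolding cn_recfn
    by (rule recfn_cong) (metis len1 One_nat_def list.sel(3))
qed

lemma cn_pred: "computable_nat (\<lambda>n. n - 1)"
proof -
  have "computable_nat (\<lambda>n. rec_nat 0 (\<lambda>m y. [m, y] ! 0) n)"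
    by (rule recfn_rec0) (rule recfn_proj, simp)
  moreover have "rec_nat 0 (\<lambda>m y. [m, y] ! 0) n = n - 1" for n :: nat by (cases n) auto
  ultimately show ?thesis by simp
qed

lemma comp2I: "recfn 2 (\<lambda>xs. F (xs!0) (xs!1)) \<Longrightarrow> comp2 F" unfolding comp2_def .
lemma comp3I: "recfn 3 (\<lambda>xs. F (xs!0) (xs!1) (xs!2)) \<Longrightarrow> comp3 F" unfolding comp3_def .

lemma rec_add: "rec_nat x (\<lambda>m y. Suc y) n = n + x" by (induction n) auto
lemma rec_mult: "rec_nat 0 (\<lambda>m y. y + x) n = n * x" by (induction n) auto
lemma rec_sub: "rec_nat x (\<lambda>m y. y - Suc 0) n = x - n" by (induction n) auto

lemma comp2_add: "comp2 (\<lambda>a b. a + b)"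
proof -
  have "comp2 (\<lambda>n x. rec_nat ((\<lambda>x. x) x) (\<lambda>m y. (\<lambda>m y x. Suc y) m y x) n)"
    by (intro comp2_rec cn_id comp3I recfn_Suc recfn_proj) simp
  then show ?thesis by (simp add: rec_add)
qed

lemma comp2_mult: "comp2 (\<lambda>a b. a * b)"
proof -
  have "comp2 (\<lambda>n x. rec_nat ((\<lambda>x. 0) x) (\<lambda>m y. (\<lambda>m y x. y + x) m y x) n)"
    by (intro comp2_rec comp3I recfn_comp2[OF comp2_add] recfn_proj)
       (auto simp: cn_recfn intro: recfn_const)
  then show ?thesis by (simp add: rec_mult)
qed

lemma comp2_swap: assumes "comp2 F" shows "comp2 (\<lambda>a b. F b a)"
  unfolding comp2_def by (rule recfn_comp2[OF assms]) (auto intro: recfn_proj)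

lemma comp2_sub: "comp2 (\<lambda>a b. a - b)"
proof -
  have "comp2 (\<lambda>n x. rec_nat ((\<lambda>x. x) x) (\<lambda>m y. (\<lambda>m y x. y - 1) m y x) n)"
    by (intro comp2_rec cn_id comp3I recfn_comp1[OF cn_pred] recfn_proj) simp
  then have "comp2 (\<lambda>n x. x - n)" by (simp add: rec_sub)
  then have "comp2 (\<lambda>a b. (\<lambda>n x. x - n) b a)" by (rule comp2_swap)
  then show ?thesis by simp
qed

lemma cn_triangle: "computable_nat triangle"
proof -
  have "computable_nat (\<lambda>n. rec_nat 0 (\<lambda>m y. [m, y] ! 1 + Suc ([m, y] ! 0)) n)"
    by (intro recfn_rec0 recfn_comp2[OF comp2_add] recfn_Suc recfn_proj) auto
  moreover have "rec_nat 0 (\<lambda>m y. [m, y] ! 1 + Suc ([m, y] ! 0)) n = triangle n" for n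
    by (induction n) auto
  ultimately show ?thesis by simp
qed

lemma pe_eq: "prod_encode (a, b) = triangle (a + b) + a"
  by (simp add: prod_encode_def)

lemma comp2_pe: "comp2 (\<lambda>a b. prod_encode (a, b))"
proof -
  have "comp2 (\<lambda>a b. triangle (a + b) + a)"
    by (intro comp2I recfn_comp2[OF comp2_add] recfn_comp1[OF cn_triangle] recfn_proj) auto
  then show ?thesis by (simp add: pe_eq)
qed

lemma comp2_least:
  assumes "comp2 F" "\<And>x. \<exists>i. F i x = 0"
  shows "computable_nat (\<lambda>x. LEAST i. F i x = 0)"
proof -
  have "recfn 1 (\<lambda>xs. LEAST n. F ((n # xs)!0) ((n # xs)!1) = 0)"
    by (rule recfn_Mn) (use assms in \<open>auto simp: comp2_def nums\<close>)
  then show ?thesis by (rule cn_recfn1[OF recfn_cong]) auto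
qed

lemma prod_decode_least:
  "prod_decode p = (let s = (LEAST s. p < triangle (Suc s)) in (p - triangle s, s - (p - triangle s)))"
proof -
  define s where "s = (LEAST s. p < triangle (Suc s))"
  have ex: "p < triangle (Suc p)" by (induction p) auto
  have s1: "p < triangle (Suc s)" unfolding s_def using ex by (rule LeastI)
  have s2: "triangle s \<le> p"
  proof (cases s)
    case (Suc s')
    then have "\<not> p < triangle (Suc s')" unfolding s_def by (metis Suc lessI not_less_Least s_def)
    then show ?thesis using Suc by simp
  qed simp
  define a where "a = p - triangle s"
  have "a \<le> s" using s1 s2 unfolding a_def by simp
  then have "prod_encode (a, s - a) = p" unfolding prod_encode_def a_def using s2 by simp
  then have "prod_decode p = (a, s - a)" by (metis prod_encode_inverse)
  then show ?thesis unfolding Let_def s_def[symmetric] a_def .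
qed

lemma cn_pfst: "computable_nat pfst" and cn_psnd: "computable_nat psnd"
proof -
  have c1: "comp2 (\<lambda>s p. 1 - (triangle (Suc s) - p))"
    by (intro comp2I recfn_comp2[OF comp2_sub] recfn_comp1[OF cn_triangle] recfn_Suc
        recfn_proj recfn_const) auto
  have "computable_nat (\<lambda>p. LEAST s. 1 - (triangle (Suc s) - p) = 0)"
  proof (rule comp2_least[OF c1])
    fix p :: nat
    have "p < triangle (Suc p)" by (induction p) auto
    then show "\<exists>i. 1 - (triangle (Suc i) - p) = 0" by (intro exI[of _ p]) simp
  qed
  moreover have "(LEAST s. 1 - (triangle (Suc s) - p) = 0) = (LEAST s. p < triangle (Suc s))" for p
    by (rule arg_cong[where f = Least]) (rule ext, linarith)
  ultimately have L: "computable_nat (\<lambda>p. LEAST s. p < triangle (Suc s))" by simp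
  have "computable_nat (\<lambda>p. p - triangle (LEAST s. p < triangle (Suc s)))"
    unfolding cn_recfn
    by (intro recfn_comp2[OF comp2_sub] recfn_comp1[OF cn_triangle] recfn_comp1[OF L]
        recfn_cong[OF recfn_proj[of 0]]) (auto simp: hd0)
  then show "computable_nat pfst" by (simp add: prod_decode_least Let_def)
  have "computable_nat (\<lambda>p. (LEAST s. p < triangle (Suc s)) - (p - triangle (LEAST s. p < triangle (Suc s))))"
    unfolding cn_recfn
    by (intro recfn_comp2[OF comp2_sub] recfn_comp1[OF cn_triangle] recfn_comp1[OF L]
        recfn_cong[OF recfn_proj[of 0]]) (auto simp: hd0)
  then show "computable_nat psnd" by (simp add: prod_decode_least Let_def)
qed

abbreviation (input) cn where "cn \<equiv> computable_nat"

lemma C_comp: "cn f \<Longrightarrow> cn g \<Longrightarrow> cn (\<lambda>x. f (g x))"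
  unfolding cn_recfn by (rule recfn_comp1[unfolded cn_recfn])

lemma C_comp2: "comp2 F \<Longrightarrow> cn f \<Longrightarrow> cn g \<Longrightarrow> cn (\<lambda>x. F (f x) (g x))"
  unfolding cn_recfn by (rule recfn_comp2)

lemma C_const: "cn (\<lambda>x. c)"
  unfolding cn_recfn by (rule recfn_const)

lemma C_id: "cn (\<lambda>x. x)" by (rule cn_id)

lemma C_Suc: "cn f \<Longrightarrow> cn (\<lambda>x. Suc (f x))"
  unfolding cn_recfn by (rule recfn_Suc)

lemma C_add: "cn f \<Longrightarrow> cn g \<Longrightarrow> cn (\<lambda>x. f x + g x)"
  by (rule C_comp2[OF comp2_add])
lemma C_mult: "cn f \<Longrightarrow> cn g \<Longrightarrow> cn (\<lambda>x. f x * g x)"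
  by (rule C_comp2[OF comp2_mult])
lemma C_sub: "cn f \<Longrightarrow> cn g \<Longrightarrow> cn (\<lambda>x. f x - g x)"
  by (rule C_comp2[OF comp2_sub])
lemma C_pe: "cn f \<Longrightarrow> cn g \<Longrightarrow> cn (\<lambda>x. prod_encode (f x, g x))"
  by (rule C_comp2[OF comp2_pe])
lemma C_pfst: "cn f \<Longrightarrow> cn (\<lambda>x. pfst (f x))"
  by (rule C_comp[OF cn_pfst])
lemma C_psnd: "cn f \<Longrightarrow> cn (\<lambda>x. psnd (f x))"
  by (rule C_comp[OF cn_psnd])

lemma C_pair_comp:
  assumes "cn (\<lambda>p. F (pfst p) (psnd p))" "cn h1" "cn h2"
  shows "cn (\<lambda>x. F (h1 x) (h2 x))"
proof -
  have "cn (\<lambda>x. (\<lambda>p. F (pfst p) (psnd p)) (prod_encode (h1 x, h2 x)))"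
    by (rule C_comp[OF assms(1) C_pe[OF assms(2,3)]])
  then show ?thesis by simp
qed

lemma comp2_of_pair: "cn (\<lambda>p. F (pfst p) (psnd p)) \<Longrightarrow> comp2 F"
  unfolding comp2_def cn_recfn
  by (drule recfn_comp1[unfolded cn_recfn, OF _ recfn_comp2[OF comp2_pe recfn_proj recfn_proj, of 0 2 1]])
     (auto simp: nums)

lemma comp3_of_pair:
  assumes "cn (\<lambda>q. F (pfst q) (pfst (psnd q)) (psnd (psnd q)))"
  shows "comp3 F"
proof -
  have "recfn 3 (\<lambda>xs. (\<lambda>q. F (pfst q) (pfst (psnd q)) (psnd (psnd q)))
           (prod_encode (xs!0, prod_encode (xs!1, xs!2))))"
    by (intro recfn_comp1[OF assms] recfn_comp2[OF comp2_pe] recfn_proj) auto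
  then show ?thesis unfolding comp3_def by simp
qed

lemma C_rec:
  assumes "cn n" "cn a" "cn (\<lambda>q. St (pfst q) (pfst (psnd q)) (psnd (psnd q)))"
  shows "cn (\<lambda>x. rec_nat (a x) (\<lambda>m y. St m y x) (n x))"
  using C_comp2[OF comp2_rec[OF assms(2) comp3_of_pair[OF assms(3)]] assms(1) C_id] .

lemma C_least:
  assumes "cn (\<lambda>p. F (pfst p) (psnd p))" "\<And>x. \<exists>i. F i x = 0"
  shows "cn (\<lambda>x. LEAST i. F i x = 0)"
  by (rule comp2_least[OF comp2_of_pair[OF assms(1)] assms(2)])

definition cp :: "(nat \<Rightarrow> bool) \<Rightarrow> bool" where
  "cp P \<longleftrightarrow> cn (\<lambda>x. of_bool (P x))"

lemma C_ofbool: "cp P \<Longrightarrow> cn (\<lambda>x. of_bool (P x))"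
  unfolding cp_def .

lemma P_const: "cp (\<lambda>x. Q)"
  unfolding cp_def by (rule C_const)

lemma P_less: "cn f \<Longrightarrow> cn g \<Longrightarrow> cp (\<lambda>x. f x < g x)"
proof -
  assume "cn f" "cn g"
  then have "cn (\<lambda>x. 1 - (1 - (g x - f x)))" by (intro C_sub C_const)
  moreover have "(1::nat) - (1 - (b - a)) = of_bool (a < b)" for a b :: nat by auto
  ultimately show ?thesis unfolding cp_def by simp
qed

lemma P_not: "cp P \<Longrightarrow> cp (\<lambda>x. \<not> P x)"
proof -
  assume "cp P"
  then have "cn (\<lambda>x. 1 - of_bool (P x))" unfolding cp_def by (intro C_sub C_const)
  moreover have "(1::nat) - of_bool Q = of_bool (\<not> Q)" for Q by auto
  ultimately show ?thesis unfolding cp_def by simp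
qed



lemma P_and: "cp P \<Longrightarrow> cp Q \<Longrightarrow> cp (\<lambda>x. P x \<and> Q x)"
proof -
  assume "cp P" "cp Q"
  then have "cn (\<lambda>x. of_bool (P x) * of_bool (Q x))" unfolding cp_def by (intro C_mult)
  then show ?thesis unfolding cp_def by (simp add: of_bool_conj)
qed

lemma P_or: "cp P \<Longrightarrow> cp Q \<Longrightarrow> cp (\<lambda>x. P x \<or> Q x)"
proof -
  assume "cp P" "cp Q"
  then have "cp (\<lambda>x. \<not> (\<not> P x \<and> \<not> Q x))" by (intro P_not P_and)
  then show ?thesis by simp
qed

lemma P_imp: "cp P \<Longrightarrow> cp Q \<Longrightarrow> cp (\<lambda>x. P x \<longrightarrow> Q x)"
proof -
  assume "cp P" "cp Q"
  then have "cp (\<lambda>x. \<not> P x \<or> Q x)" by (intro P_not P_or)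
  then show ?thesis by simp
qed

lemma P_le: "cn f \<Longrightarrow> cn g \<Longrightarrow> cp (\<lambda>x. f x \<le> g x)"
proof -
  assume "cn f" "cn g"
  then have "cp (\<lambda>x. f x < Suc (g x))" by (intro P_less C_Suc)
  then show ?thesis by (simp add: less_Suc_eq_le)
qed

lemma P_eq: "cn f \<Longrightarrow> cn g \<Longrightarrow> cp (\<lambda>x. f x = g x)"
proof -
  assume "cn f" "cn g"
  then have "cp (\<lambda>x. f x \<le> g x \<and> g x \<le> f x)" by (intro P_and P_le)
  then show ?thesis by (simp add: eq_iff)
qed

lemma P_neq: "cn f \<Longrightarrow> cn g \<Longrightarrow> cp (\<lambda>x. f x \<noteq> g x)"
  by (intro P_not P_eq)

lemma C_if: "cp P \<Longrightarrow> cn f \<Longrightarrow> cn g \<Longrightarrow> cn (\<lambda>x. if P x then f x else g x)"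
proof -
  assume "cp P" "cn f" "cn g"
  then have "cn (\<lambda>x. of_bool (P x) * f x + (1 - of_bool (P x)) * g x)"
    unfolding cp_def by (intro C_add C_mult C_sub C_const)
  moreover have "(\<lambda>x. if P x then f x else g x) = (\<lambda>x. of_bool (P x) * f x + (1 - of_bool (P x)) * g x)"
    by (rule ext) simp
  ultimately show ?thesis by simp
qed

lemma rec_sum: "rec_nat 0 (\<lambda>m y. y + F m) n = (\<Sum>i<n. F i)"
  by (induction n) auto

lemma C_sum:
  assumes "cn n" "cn (\<lambda>p. F (pfst p) (psnd p))"
  shows "cn (\<lambda>x. \<Sum>i<n x. F i x)"
proof -
  have "cn (\<lambda>q. pfst (psnd q) + F (pfst q) (psnd (psnd q)))"
    by (intro C_add C_pfst C_psnd C_id C_pair_comp[OF assms(2)])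
  then have "cn (\<lambda>x. rec_nat (0) (\<lambda>m y. y + F m x) (n x))"
    by (intro C_rec[OF assms(1) C_const, where St = "\<lambda>m y x. y + F m x"]) simp
  then show ?thesis by (simp add: rec_sum)
qed

lemma P_all:
  assumes "cn n" "cp (\<lambda>p. P (pfst p) (psnd p))"
  shows "cp (\<lambda>x. \<forall>i<n x. P i x)"
proof -
  have "cp (\<lambda>x. (\<Sum>i<n x. 1 - of_bool (P i x)) = (0::nat))"
    by (intro P_eq C_sum C_sub C_const C_ofbool assms)
  moreover have "((\<Sum>i<m. (1::nat) - of_bool (Q i)) = 0) = (\<forall>i<m. Q i)" for m :: nat and Q
    by (induction m) (auto simp: less_Suc_eq)
  ultimately show ?thesis by simp
qed

lemma P_ex:
  assumes "cn n" "cp (\<lambda>p. P (pfst p) (psnd p))"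
  shows "cp (\<lambda>x. \<exists>i<n x. P i x)"
proof -
  have "cp (\<lambda>x. \<not> (\<forall>i<n x. \<not> P i x))"
    by (intro P_not P_all assms)
  then show ?thesis by simp
qed

lemma C_leastP:
  assumes "cp (\<lambda>p. P (pfst p) (psnd p))" "\<And>x. \<exists>i. P i x"
  shows "cn (\<lambda>x. LEAST i. P i x)"
proof -
  have "cn (\<lambda>x. LEAST i. (1::nat) - of_bool (P i x) = 0)"
    by (rule C_least) (use assms in \<open>auto simp: cp_def intro!: C_sub C_const\<close>)
  moreover have "(LEAST i. (1::nat) - of_bool (P i x) = 0) = (LEAST i. P i x)" for x
    by (rule arg_cong[where f = Least]) auto
  ultimately show ?thesis by simp
qed

lemma C_pow: "cn f \<Longrightarrow> cn g \<Longrightarrow> cn (\<lambda>x. f x ^ g x)"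
proof -
  assume f: "cn f" and g: "cn g"
  have s: "cn (\<lambda>q. pfst (psnd q) * f (psnd (psnd q)))"
    by (intro C_mult C_pfst C_psnd C_id C_comp[OF f])
  have "cn (\<lambda>x. rec_nat 1 (\<lambda>m y. y * f x) (g x))"
    using C_rec[where St = "\<lambda>m y x. y * f x", OF g C_const] s by simp
  moreover have "rec_nat 1 (\<lambda>m y. y * a) n = a ^ n" for a n :: nat
    by (induction n) auto
  ultimately show ?thesis by simp
qed

lemma div_least: "(a::nat) div b = (LEAST q. b = 0 \<or> a < b * Suc q)"
proof (cases "b = 0")
  case False
  have lt: "a < b * Suc (a div b)"
  proof -
    have "a mod b < b" using False by simp
    moreover have "b * Suc (a div b) = b * (a div b) + b" by simp
    ultimately show ?thesis using mult_div_mod_eq[of b a] by linarith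
  qed
  show ?thesis
  proof (rule Least_equality[symmetric])
    show "b = 0 \<or> a < b * Suc (a div b)" using lt by simp
    fix y assume "b = 0 \<or> a < b * Suc y"
    then have "a < b * Suc y" using False by simp
    then show "a div b \<le> y" using False
      by (metis less_Suc_eq_le less_mult_imp_div_less mult.commute)
  qed
qed simp

lemma C_div: "cn f \<Longrightarrow> cn g \<Longrightarrow> cn (\<lambda>x. f x div g x)"
proof -
  assume f: "cn f" and g: "cn g"
  have "cn (\<lambda>x. LEAST q. g x = 0 \<or> f x < g x * Suc q)"
  proof (rule C_leastP[where P = "\<lambda>q x. g x = 0 \<or> f x < g x * Suc q"])
    show "cp (\<lambda>p. g (psnd p) = 0 \<or> f (psnd p) < g (psnd p) * Suc (pfst p))"
      by (intro P_or P_eq P_less C_mult C_Suc C_pfst C_psnd C_id C_const C_comp[OF f] C_comp[OF g])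
    fix x show "\<exists>i. g x = 0 \<or> f x < g x * Suc i"
    proof (cases "g x = 0")
      case False
      have "f x mod g x < g x" using False by simp
      moreover have "g x * Suc (f x div g x) = g x * (f x div g x) + g x" by simp
      ultimately have "f x < g x * Suc (f x div g x)" using mult_div_mod_eq[of "g x" "f x"] by linarith
      then show ?thesis by blast
    qed simp
  qed
  then show ?thesis by (simp add: div_least)
qed

lemma C_mod: "cn f \<Longrightarrow> cn g \<Longrightarrow> cn (\<lambda>x. f x mod g x)"
proof -
  assume "cn f" "cn g"
  then have "cn (\<lambda>x. f x - g x * (f x div g x))" by (intro C_sub C_mult C_div)
  then show ?thesis by (simp add: minus_mult_div_eq_mod)
qed

lemma P_even: "cn f \<Longrightarrow> cp (\<lambda>x. even (f x))"
proof -
  assume "cn f"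
  then have "cp (\<lambda>x. f x mod 2 = 0)" by (intro P_eq C_mod C_const)
  then show ?thesis by (simp add: even_iff_mod_2_eq_zero)
qed

lemmas C_rules = C_const C_id C_Suc C_add C_mult C_sub C_pe C_pfst C_psnd C_ofbool C_if
  C_pow C_div C_mod P_const P_less P_le P_eq P_neq P_not P_and P_or P_imp P_even


definition strn :: "nat \<Rightarrow> nat \<Rightarrow> bool list" where
  "strn L x = map (\<lambda>i. odd (x div 2 ^ i)) [0..<L]"

lemma length_strn[simp]: "length (strn L x) = L"
  by (simp add: strn_def)

lemma strn_nth: "i < L \<Longrightarrow> strn L x ! i = odd (x div 2 ^ i)"
  by (simp add: strn_def)

lemma strn_0[simp]: "strn 0 x = []" by (simp add: strn_def)

lemma strn_Suc: "strn (Suc L) x = odd x # strn L (x div 2)"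
proof (rule nth_equalityI)
  fix i assume "i < length (strn (Suc L) x)"
  then show "strn (Suc L) x ! i = (odd x # strn L (x div 2)) ! i"
    by (cases i) (auto simp: strn_nth div_mult2_eq power_Suc)
qed simp

lemma take_strn: "k \<le> L \<Longrightarrow> take k (strn L x) = strn k x"
  by (rule nth_equalityI) (auto simp: strn_nth)

lemma strn_inj: "x < 2 ^ L \<Longrightarrow> y < 2 ^ L \<Longrightarrow> strn L x = strn L y \<Longrightarrow> x = y"
proof (induction L arbitrary: x y)
  case 0 then show ?case by simp
next
  case (Suc L)
  have "x div 2 < 2 ^ L" "y div 2 < 2 ^ L" using Suc.prems by auto
  moreover have "strn L (x div 2) = strn L (y div 2)" "odd x = odd y"
    using Suc.prems(3) by (auto simp: strn_Suc)
  ultimately have "x div 2 = y div 2" "odd x = odd y" using Suc.IH by auto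
  then show ?case by (metis div_mult_mod_eq odd_iff_mod_2_eq_one mod2_eq_if)
qed

lemma strn_surj: "length \<rho> = L \<Longrightarrow> \<exists>x<2 ^ L. strn L x = \<rho>"
proof (induction \<rho> arbitrary: L)
  case Nil then show ?case by auto
next
  case (Cons a \<rho>)
  then obtain x where x: "x < 2 ^ length \<rho>" "strn (length \<rho>) x = \<rho>" by auto
  define y where "y = of_bool a + 2 * x"
  have "y div 2 = x" "odd y = a" unfolding y_def by auto
  moreover have "y < 2 ^ Suc (length \<rho>)" using x unfolding y_def by (cases a) auto
  ultimately show ?case using Cons.prems x by (auto simp: strn_Suc)
qed

lemma strn_bij: "bij_betw (strn L) {..<2 ^ L} {\<rho>. length \<rho> = L}"
  unfolding bij_betw_def
proof
  show "inj_on (strn L) {..<2 ^ L}" unfolding inj_on_def using strn_inj by blast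
  show "strn L ` {..<2 ^ L} = {\<rho>. length \<rho> = L}"
  proof (rule set_eqI, rule iffI)
    fix \<rho> assume "\<rho> \<in> strn L ` {..<2 ^ L}" then show "\<rho> \<in> {\<rho>. length \<rho> = L}" by auto
  next
    fix \<rho> :: "bool list" assume "\<rho> \<in> {\<rho>. length \<rho> = L}"
    then obtain x where "x < 2 ^ L" "strn L x = \<rho>" using strn_surj by auto
    then show "\<rho> \<in> strn L ` {..<2 ^ L}" by force
  qed
qed

definition cfun :: "nat \<Rightarrow> (nat \<Rightarrow> nat) \<Rightarrow> nat" where
  "cfun n F = rec_nat 0 (\<lambda>j y. Suc (prod_encode (F (n - Suc j), y))) n"

lemma code_str_Cons: "code_str (a # \<rho>) = Suc (prod_encode (of_bool a, code_str \<rho>))"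
  by (simp add: code_str_def)

lemma cfun_aux:
  assumes "\<And>j. j < n \<Longrightarrow> F j \<le> 1" "j \<le> n"
  shows "rec_nat 0 (\<lambda>j y. Suc (prod_encode (F (n - Suc j), y))) j
         = code_str (map (\<lambda>i. F i = 1) [n - j..<n])"
  using assms(2)
proof (induction j)
  case 0 then show ?case by (simp add: code_str_def)
next
  case (Suc j)
  have e: "[n - Suc j..<n] = (n - Suc j) # [n - j..<n]"
    using Suc.prems by (simp add: Suc_diff_Suc upt_conv_Cons)
  have "of_bool (F (n - Suc j) = 1) = F (n - Suc j)"
    using assms(1)[of "n - Suc j"] Suc.prems by (cases "F (n - Suc j)") auto
  then show ?case using Suc by (simp add: e code_str_Cons)
qed

lemma cfun_code: "(\<And>j. j < n \<Longrightarrow> F j \<le> 1) \<Longrightarrow> cfun n F = code_str (map (\<lambda>j. F j = 1) [0..<n])"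
  unfolding cfun_def using cfun_aux[of n F n] by simp

definition cstr :: "nat \<Rightarrow> nat \<Rightarrow> nat" where
  "cstr L x = cfun L (\<lambda>i. x div 2 ^ i mod 2)"

lemma cstr_code: "cstr L x = code_str (strn L x)"
proof -
  have "cstr L x = code_str (map (\<lambda>j. x div 2 ^ j mod 2 = 1) [0..<L])"
    unfolding cstr_def by (rule cfun_code) simp
  also have "map (\<lambda>j. x div 2 ^ j mod 2 = 1) [0..<L] = strn L x"
    unfolding strn_def by (simp add: odd_iff_mod_2_eq_one)
  finally show ?thesis .
qed

lemma code_str_inj: "code_str \<rho> = code_str \<rho>' \<Longrightarrow> \<rho> = \<rho>'"
proof -
  assume "code_str \<rho> = code_str \<rho>'"
  then have "map (of_bool :: bool \<Rightarrow> nat) \<rho> = map of_bool \<rho>'" unfolding code_str_def by (simp add: list_encode_eq)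
  moreover have "inj (of_bool :: bool \<Rightarrow> nat)" by (rule injI) (auto simp: of_bool_def split: if_splits)
  ultimately show ?thesis by (simp add: inj_map_eq_map)
qed

lemma C_cfun:
  assumes "cn n" "cn (\<lambda>p. F (pfst p) (psnd p))"
  shows "cn (\<lambda>x. cfun (n x) (\<lambda>j. F j x))"
proof -
  have "cn (\<lambda>q. Suc (prod_encode (F (n (psnd (psnd q)) - Suc (pfst q)) (psnd (psnd q)), pfst (psnd q))))"
    by (intro C_Suc C_pe C_pfst C_psnd C_id C_sub C_pair_comp[OF assms(2)] C_comp[OF assms(1)])
  then have "cn (\<lambda>x. rec_nat 0 (\<lambda>j y. Suc (prod_encode (F (n x - Suc j) x, y))) (n x))"
    using C_rec[where St = "\<lambda>j y x. Suc (prod_encode (F (n x - Suc j) x, y))", OF assms(1) C_const]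
    by simp
  then show ?thesis by (simp add: cfun_def)
qed

lemma C_cstr: "cn f \<Longrightarrow> cn g \<Longrightarrow> cn (\<lambda>x. cstr (f x) (g x))"
proof -
  assume f: "cn f" and g: "cn g"
  have "cn (\<lambda>x. cfun (f x) (\<lambda>i. g x div 2 ^ i mod 2))"
    by (rule C_cfun[OF f, where F = "\<lambda>i x. g x div 2 ^ i mod 2"])
       (intro C_mod C_div C_pow C_const C_pfst C_psnd C_id C_comp[OF g])
  then show ?thesis by (simp add: cstr_def)
qed

lemma C_triple_comp:
  assumes "cn (\<lambda>q. F (pfst q) (pfst (psnd q)) (psnd (psnd q)))" "cn h1" "cn h2" "cn h3"
  shows "cn (\<lambda>x. F (h1 x) (h2 x) (h3 x))"
proof -
  have "cn (\<lambda>x. (\<lambda>q. F (pfst q) (pfst (psnd q)) (psnd (psnd q))) (prod_encode (h1 x, prod_encode (h2 x, h3 x))))"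
    by (rule C_comp[OF assms(1)]) (intro C_pe assms(2-4))
  then show ?thesis by simp
qed


definition okb :: "(nat \<Rightarrow> nat) \<Rightarrow> nat \<Rightarrow> nat \<Rightarrow> nat \<Rightarrow> bool" where
  "okb h x k j \<longleftrightarrow> h (prod_encode (cstr k x, j)) < 2"

definition goodL :: "(nat \<Rightarrow> nat) \<Rightarrow> nat \<Rightarrow> nat \<Rightarrow> bool" where
  "goodL h L n \<longleftrightarrow> (\<forall>x<2 ^ L. \<forall>j<n. \<exists>k<Suc L. okb h x k j)"

definition obit :: "(nat \<Rightarrow> nat) \<Rightarrow> nat \<Rightarrow> nat \<Rightarrow> nat \<Rightarrow> nat" where
  "obit h x L j = h (prod_encode (cstr (LEAST k. okb h x k j \<or> L \<le> k) x, j))"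

definition tcode :: "(nat \<Rightarrow> nat) \<Rightarrow> nat \<Rightarrow> nat \<Rightarrow> nat \<Rightarrow> nat" where
  "tcode h x L n = cfun n (\<lambda>j. obit h x L j)"

definition slen :: "nat \<Rightarrow> nat" where
  "slen c = (LEAST s. (\<exists>x<2 ^ s. cstr s x = c) \<or> c \<le> s)"

definition valid :: "nat \<Rightarrow> bool" where
  "valid c \<longleftrightarrow> (\<exists>x<2 ^ slen c. cstr (slen c) x = c)"

definition Lof :: "(nat \<Rightarrow> nat) \<Rightarrow> nat \<Rightarrow> nat \<Rightarrow> nat" where
  "Lof h s n = s + (LEAST L. goodL h (s + L) n)"

definition sep :: "(nat \<Rightarrow> nat) \<Rightarrow> nat \<Rightarrow> nat \<Rightarrow> nat \<Rightarrow> bool" where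
  "sep h s c n \<longleftrightarrow> (\<forall>x<2 ^ Lof h s n. \<forall>y<2 ^ Lof h s n.
      cstr s x = c \<and> cstr s y \<noteq> c \<longrightarrow> tcode h x (Lof h s n) n \<noteq> tcode h y (Lof h s n) n)"

definition Nof :: "(nat \<Rightarrow> nat) \<Rightarrow> nat \<Rightarrow> nat" where
  "Nof h c = (LEAST n. \<not> valid c \<or> sep h (slen c) c n)"

definition Lc :: "(nat \<Rightarrow> nat) \<Rightarrow> nat \<Rightarrow> nat" where
  "Lc h c = Lof h (slen c) (Nof h c)"

definition dval :: "(nat \<Rightarrow> nat) \<Rightarrow> nat \<Rightarrow> nat \<Rightarrow> nat" where
  "dval ab t k = (if even (pfst (ab (prod_encode (t, Suc k))))
      then pfst (ab (prod_encode (t, Suc k))) div 2 else 0) * 2 ^ Suc k div Suc (psnd (ab (prod_encode (t, Suc k))))"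

definition Dsum :: "(nat \<Rightarrow> nat) \<Rightarrow> (nat \<Rightarrow> nat) \<Rightarrow> nat \<Rightarrow> nat \<Rightarrow> nat" where
  "Dsum h ab c k = (\<Sum>x<2 ^ Lc h c. if cstr (slen c) x = c then dval ab (tcode h x (Lc h c) (Nof h c)) k else 0)"

definition alg :: "(nat \<Rightarrow> nat) \<Rightarrow> (nat \<Rightarrow> nat) \<Rightarrow> nat \<Rightarrow> nat" where
  "alg h ab p = prod_encode (2 * Dsum h ab (pfst p) (psnd p),
      2 ^ (Suc (psnd p) + (Lc h (pfst p) - slen (pfst p))) - 1)"

lemma cp_triple_comp:
  assumes "cp (\<lambda>q. P (pfst q) (pfst (psnd q)) (psnd (psnd q)))" "cn h1" "cn h2" "cn h3"
  shows "cp (\<lambda>x. P (h1 x) (h2 x) (h3 x))"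
  using C_triple_comp[where F = "\<lambda>a b c. of_bool (P a b c)", OF assms[unfolded cp_def]]
  unfolding cp_def .

lemma cp_pair_comp:
  assumes "cp (\<lambda>q. P (pfst q) (psnd q))" "cn h1" "cn h2"
  shows "cp (\<lambda>x. P (h1 x) (h2 x))"
  using C_pair_comp[where F = "\<lambda>a b. of_bool (P a b)", OF assms[unfolded cp_def]]
  unfolding cp_def .

lemma C_slen: "cn f \<Longrightarrow> cn (\<lambda>z. slen (f z))"
proof -
  assume f: "cn f"
  have "cn slen" unfolding slen_def
  proof (rule C_leastP[where P = "\<lambda>s c. (\<exists>x<2 ^ s. cstr s x = c) \<or> c \<le> s"])
    show "cp (\<lambda>p. (\<exists>x<2 ^ pfst p. cstr (pfst p) x = psnd p) \<or> psnd p \<le> pfst p)"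
      by (intro P_or P_ex P_eq P_le C_cstr C_pow C_const C_pfst C_psnd C_id)
  qed auto
  then show ?thesis using C_comp f by blast
qed

lemma P_valid: "cn f \<Longrightarrow> cp (\<lambda>z. valid (f z))"
proof -
  assume f: "cn f"
  have "cp valid" unfolding valid_def
    by (intro P_ex P_eq C_cstr C_pow C_const C_slen C_pfst C_psnd C_id)
  then show ?thesis unfolding cp_def using C_comp f by blast
qed

context
  fixes h :: "nat \<Rightarrow> nat"
  assumes h: "cn h"
begin

lemma P_okb: "cn f \<Longrightarrow> cn g \<Longrightarrow> cn u \<Longrightarrow> cp (\<lambda>z. okb h (f z) (g z) (u z))"
proof -
  have "cp (\<lambda>q. okb h (pfst q) (pfst (psnd q)) (psnd (psnd q)))" unfolding okb_def
    by (intro P_less C_comp[OF h] C_pe C_cstr C_const C_pfst C_psnd C_id)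
  then show "cn f \<Longrightarrow> cn g \<Longrightarrow> cn u \<Longrightarrow> ?thesis" by (rule cp_triple_comp)
qed

lemma P_goodL: "cn f \<Longrightarrow> cn g \<Longrightarrow> cp (\<lambda>z. goodL h (f z) (g z))"
proof -
  have "cp (\<lambda>q. goodL h (pfst q) (psnd q))" unfolding goodL_def
    by (intro P_all P_ex P_okb C_pow C_Suc C_const C_pfst C_psnd C_id)
  then show "cn f \<Longrightarrow> cn g \<Longrightarrow> ?thesis" by (rule cp_pair_comp)
qed

lemma C_obit: "cn f \<Longrightarrow> cn g \<Longrightarrow> cn u \<Longrightarrow> cn (\<lambda>z. obit h (f z) (g z) (u z))"
proof -
  have L: "cn (\<lambda>q. LEAST k. okb h (pfst q) k (psnd (psnd q)) \<or> pfst (psnd q) \<le> k)"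
  proof (rule C_leastP[where P = "\<lambda>k q. okb h (pfst q) k (psnd (psnd q)) \<or> pfst (psnd q) \<le> k"])
    show "cp (\<lambda>p. okb h (pfst (psnd p)) (pfst p) (psnd (psnd (psnd p))) \<or> pfst (psnd (psnd p)) \<le> pfst p)"
      by (intro P_or P_okb P_le C_pfst C_psnd C_id)
  qed auto
  have "cn (\<lambda>q. obit h (pfst q) (pfst (psnd q)) (psnd (psnd q)))" unfolding obit_def
    by (intro C_comp[OF h] C_pe C_cstr L C_pfst C_psnd C_id)
  then show "cn f \<Longrightarrow> cn g \<Longrightarrow> cn u \<Longrightarrow> ?thesis" by (rule C_triple_comp)
qed

lemma C_tcode: "cn f \<Longrightarrow> cn g \<Longrightarrow> cn u \<Longrightarrow> cn (\<lambda>z. tcode h (f z) (g z) (u z))"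
proof -
  have "cn (\<lambda>q. tcode h (pfst q) (pfst (psnd q)) (psnd (psnd q)))" unfolding tcode_def
    by (rule C_cfun[where F = "\<lambda>j q. obit h (pfst q) (pfst (psnd q)) j"])
       (intro C_obit C_pfst C_psnd C_id)+
  then show "cn f \<Longrightarrow> cn g \<Longrightarrow> cn u \<Longrightarrow> ?thesis" by (rule C_triple_comp)
qed

context
  assumes totL: "\<And>s n. \<exists>L. goodL h (s + L) n"
begin

lemma C_Lof: "cn f \<Longrightarrow> cn g \<Longrightarrow> cn (\<lambda>z. Lof h (f z) (g z))"
proof -
  have L: "cn (\<lambda>q. LEAST L. goodL h (pfst q + L) (psnd q))"
  proof (rule C_leastP[where P = "\<lambda>L q. goodL h (pfst q + L) (psnd q)"])
    show "cp (\<lambda>p. goodL h (pfst (psnd p) + pfst p) (psnd (psnd p)))"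
      by (intro P_goodL C_add C_pfst C_psnd C_id)
  qed (rule totL)
  have "cn (\<lambda>q. Lof h (pfst q) (psnd q))" unfolding Lof_def
    by (intro C_add L C_pfst C_id)
  then show "cn f \<Longrightarrow> cn g \<Longrightarrow> ?thesis" by (rule C_pair_comp)
qed

lemma P_sep: "cn f \<Longrightarrow> cn g \<Longrightarrow> cn u \<Longrightarrow> cp (\<lambda>z. sep h (f z) (g z) (u z))"
proof -
  have "cp (\<lambda>q. sep h (pfst q) (pfst (psnd q)) (psnd (psnd q)))" unfolding sep_def
    by (intro P_all P_imp P_and P_eq P_neq C_tcode C_Lof C_cstr C_pow C_const C_pfst C_psnd C_id)
  then show "cn f \<Longrightarrow> cn g \<Longrightarrow> cn u \<Longrightarrow> ?thesis" by (rule cp_triple_comp)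
qed

context
  assumes totN: "\<And>c. \<exists>n. \<not> valid c \<or> sep h (slen c) c n"
begin

lemma C_Nof: "cn f \<Longrightarrow> cn (\<lambda>z. Nof h (f z))"
proof -
  have "cn (Nof h)" unfolding Nof_def
  proof (rule C_leastP[where P = "\<lambda>n c. \<not> valid c \<or> sep h (slen c) c n"])
    show "cp (\<lambda>p. \<not> valid (psnd p) \<or> sep h (slen (psnd p)) (psnd p) (pfst p))"
      by (intro P_or P_not P_valid P_sep C_slen C_pfst C_psnd C_id)
  qed (rule totN)
  then show "cn f \<Longrightarrow> ?thesis" using C_comp by blast
qed

lemma C_Lc: "cn f \<Longrightarrow> cn (\<lambda>z. Lc h (f z))"
  unfolding Lc_def by (intro C_Lof C_slen C_Nof)

lemma C_alg:
  assumes ab: "cn ab"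
  shows "cn (alg h ab)"
proof -
  have dv: "cn (\<lambda>q. dval ab (pfst q) (psnd q))" unfolding dval_def
    by (intro C_rules C_comp[OF ab])
  have D: "cn (\<lambda>q. Dsum h ab (pfst q) (psnd q))" unfolding Dsum_def
    by (intro C_sum C_if C_pair_comp[OF dv] C_tcode C_Lc C_Nof C_cstr C_slen C_rules)
  show ?thesis unfolding alg_def[abs_def]
    by (intro C_pair_comp[OF D] C_Lc C_slen C_rules)
qed

end
end
end


lemma konig:
  fixes P :: "'a::finite list \<Rightarrow> bool"
  assumes pc: "\<And>xs ys. P (xs @ ys) \<Longrightarrow> P xs" and ex: "\<And>n. \<exists>xs. length xs = n \<and> P xs"
  shows "\<exists>X. \<forall>n. P (map X [0..<n])"
proof -
  define Q where "Q xs \<longleftrightarrow> (\<forall>m. \<exists>ys. length ys = m \<and> P (xs @ ys))" for xs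
  have Q0: "Q []" using ex by (simp add: Q_def)
  have step: "\<exists>a. Q (xs @ [a])" if Qxs: "Q xs" for xs
  proof (rule ccontr)
    assume "\<not> (\<exists>a. Q (xs @ [a]))"
    then have "\<forall>a. \<exists>m. \<forall>ys. length ys = m \<longrightarrow> \<not> P (xs @ [a] @ ys)" unfolding Q_def by auto
    then obtain mf where mf: "\<And>a ys. length ys = mf a \<Longrightarrow> \<not> P (xs @ [a] @ ys)" by metis
    define M where "M = Max (range mf)"
    have mM: "mf a \<le> M" for a unfolding M_def by (rule Max_ge) auto
    from Qxs obtain ys where ys: "length ys = Suc M" "P (xs @ ys)" unfolding Q_def by blast
    then obtain a ys' where ys': "ys = a # ys'" "length ys' = M" by (cases ys) auto
    have "xs @ ys = (xs @ [a] @ take (mf a) ys') @ drop (mf a) ys'" using ys' by simp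
    then have "P (xs @ [a] @ take (mf a) ys')" using ys(2) pc by metis
    moreover have "length (take (mf a) ys') = mf a" using ys' mM[of a] by simp
    ultimately show False using mf by blast
  qed
  define nxt where "nxt p = p @ [SOME a. Q (p @ [a])]" for p
  define path where "path n = (nxt ^^ n) []" for n
  have Qp: "Q (path n) \<and> length (path n) = n" for n
  proof (induction n)
    case 0 then show ?case using Q0 by (simp add: path_def)
  next
    case (Suc n)
    have "path (Suc n) = nxt (path n)" by (simp add: path_def)
    moreover have "Q (nxt (path n))" unfolding nxt_def using step[of "path n"] Suc by (metis someI_ex)
    ultimately show ?case using Suc by (simp add: nxt_def)
  qed
  define X where "X i = path (Suc i) ! i" for i
  have "map X [0..<n] = path n" for n
  proof (induction n)
    case 0 then show ?case using Qp[of 0] by simp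
  next
    case (Suc n)
    have ps: "path (Suc n) = path n @ [SOME a. Q (path n @ [a])]" by (simp add: path_def nxt_def)
    have "X n = (SOME a. Q (path n @ [a]))" unfolding X_def ps using Qp[of n] by (simp add: nth_append)
    then show ?case using Suc ps by simp
  qed
  then have "P (map X [0..<n])" for n using Qp[of n] unfolding Q_def by (metis append_Nil2 length_0_conv)
  then show ?thesis by blast
qed

definition ext :: "bool list \<Rightarrow> nat \<Rightarrow> bool" where
  "ext \<rho> i = (i < length \<rho> \<and> \<rho> ! i)"

lemma init_seg_ext: "k \<le> length \<rho> \<Longrightarrow> init_seg (ext \<rho>) k = take k \<rho>"
  by (rule nth_equalityI) (auto simp: init_seg_def ext_def)

lemma take_init_seg: "k \<le> L \<Longrightarrow> take k (init_seg X L) = init_seg X k"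
  by (rule nth_equalityI) (auto simp: init_seg_def)

lemma init_seg_mono: "init_seg X L = init_seg Y L \<Longrightarrow> k \<le> L \<Longrightarrow> init_seg X k = init_seg Y k"
  by (metis take_init_seg)

lemma init_seg_nth: "j < n \<Longrightarrow> init_seg X n ! j = X j"
  by (simp add: init_seg_def)

lemma init_seg_eq_nth: "init_seg X n = init_seg Y n \<Longrightarrow> j < n \<Longrightarrow> X j = Y j"
  by (metis init_seg_nth)

lemma init_seg_Suc: "init_seg X (Suc n) = init_seg X n @ [X n]"
  by (simp add: init_seg_def)

lemma init_seg_map: "init_seg X n = map X [0..<n]"
  by (simp add: init_seg_def)

lemma finite_len: "finite {\<tau> :: bool list. length \<tau> = n}"
  using bij_betw_finite[OF strn_bij[of n]] by simp

lemma code_str_length: "length \<rho> \<le> code_str \<rho>"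
proof (induction \<rho>)
  case (Cons a \<rho>)
  have "code_str \<rho> \<le> prod_encode (of_bool a, code_str \<rho>)" by (rule le_prod_encode_2)
  then show ?case using Cons.IH by (simp only: code_str_Cons length_Cons)
qed (simp add: code_str_def)

lemma slen_code: "slen (code_str \<sigma>) = length \<sigma>"
  unfolding slen_def
proof (rule Least_equality)
  obtain x where "x < 2 ^ length \<sigma>" "strn (length \<sigma>) x = \<sigma>" using strn_surj by blast
  then show "(\<exists>x<2 ^ length \<sigma>. cstr (length \<sigma>) x = code_str \<sigma>) \<or> code_str \<sigma> \<le> length \<sigma>"
    by (auto simp: cstr_code)
  fix s assume "(\<exists>x<2 ^ s. cstr s x = code_str \<sigma>) \<or> code_str \<sigma> \<le> s"
  then show "length \<sigma> \<le> s"
  proof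
    assume "\<exists>x<2 ^ s. cstr s x = code_str \<sigma>"
    then obtain x where "code_str (strn s x) = code_str \<sigma>" by (auto simp: cstr_code)
    then have "strn s x = \<sigma>" by (rule code_str_inj)
    then show ?thesis by auto
  next
    assume "code_str \<sigma> \<le> s" then show ?thesis using code_str_length[of \<sigma>] by simp
  qed
qed

lemma valid_code: "valid (code_str \<sigma>)"
  unfolding valid_def slen_code
  using strn_surj[of \<sigma>] by (auto simp: cstr_code)

lemma valid_E: "valid c \<Longrightarrow> \<exists>\<sigma>. c = code_str \<sigma>"
proof -
  assume "valid c"
  then obtain x where "cstr (slen c) x = c" unfolding valid_def by blast
  then have "c = code_str (strn (slen c) x)" by (simp add: cstr_code)
  then show ?thesis by blast
qed

lemma ofb_inj[simp]: "(of_bool P :: nat) = of_bool Q \<longleftrightarrow> P = Q"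
  by (cases P; cases Q) auto

locale cantor_setup =
  fixes \<Phi> :: "(nat \<Rightarrow> bool) \<Rightarrow> (nat \<Rightarrow> bool)" and h :: "nat \<Rightarrow> nat"
  assumes H1: "\<And>X n. \<exists>k. h (prod_encode (code_str (init_seg X k), n)) < 2"
    and H2: "\<And>X n k. h (prod_encode (code_str (init_seg X k), n)) < 2 \<Longrightarrow>
                h (prod_encode (code_str (init_seg X k), n)) = of_bool (\<Phi> X n)"
begin

lemma cont: "\<exists>k. \<forall>X'. init_seg X' k = init_seg X k \<longrightarrow> \<Phi> X' j = \<Phi> X j"
proof -
  obtain k where k: "h (prod_encode (code_str (init_seg X k), j)) < 2" using H1 by blast
  have "\<Phi> X' j = \<Phi> X j" if "init_seg X' k = init_seg X k" for X'
    using H2[of X' k j] H2[of X k j] k that by simp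
  then show ?thesis by blast
qed

lemma okb_iff:
  assumes "strn L x = init_seg X L" "k \<le> L"
  shows "okb h x k j \<longleftrightarrow> h (prod_encode (code_str (init_seg X k), j)) < 2"
proof -
  have "strn k x = init_seg X k" using assms by (metis take_init_seg take_strn)
  then show ?thesis by (simp add: okb_def cstr_code)
qed

lemma goodL_iff: "goodL h L n \<longleftrightarrow>
   (\<forall>X. \<forall>j<n. \<exists>k<Suc L. h (prod_encode (code_str (init_seg X k), j)) < 2)"
proof
  assume g: "goodL h L n"
  show "\<forall>X. \<forall>j<n. \<exists>k<Suc L. h (prod_encode (code_str (init_seg X k), j)) < 2"
  proof (intro allI impI)
    fix X j assume j: "j < n"
    obtain x where x: "x < 2 ^ L" "strn L x = init_seg X L" using strn_surj[of "init_seg X L" L] by auto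
    then obtain k where "k < Suc L" "okb h x k j" using g j unfolding goodL_def by blast
    then show "\<exists>k<Suc L. h (prod_encode (code_str (init_seg X k), j)) < 2"
      using okb_iff[OF x(2)] by auto
  qed
next
  assume a: "\<forall>X. \<forall>j<n. \<exists>k<Suc L. h (prod_encode (code_str (init_seg X k), j)) < 2"
  show "goodL h L n" unfolding goodL_def
  proof (intro allI impI)
    fix x :: nat and j assume "x < 2 ^ L" "j < n"
    have e: "strn L x = init_seg (ext (strn L x)) L" by (simp add: init_seg_ext)
    obtain k where "k < Suc L" "h (prod_encode (code_str (init_seg (ext (strn L x)) k), j)) < 2"
      using a \<open>j < n\<close> by blast
    then show "\<exists>k<Suc L. okb h x k j" using okb_iff[OF e] by auto
  qed
qed

lemma totL: "\<exists>L. goodL h (s + L) n"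
proof -
  have "\<exists>m. \<forall>\<rho>. length \<rho> = m \<longrightarrow> (\<exists>k\<le>m. h (prod_encode (code_str (take k \<rho>), j)) < 2)" for j
  proof (rule ccontr)
    define B where "B \<rho> \<longleftrightarrow> (\<forall>k\<le>length \<rho>. \<not> h (prod_encode (code_str (take k \<rho>), j)) < 2)" for \<rho>
    assume "\<not> ?thesis"
    then have ex: "\<exists>\<rho>. length \<rho> = m \<and> B \<rho>" for m unfolding B_def by auto
    have pc: "B (xs @ ys) \<Longrightarrow> B xs" for xs ys
    proof -
      assume a: "B (xs @ ys)"
      show "B xs" unfolding B_def
      proof (intro allI impI)
        fix k assume k: "k \<le> length xs"
        then have "take k (xs @ ys) = take k xs" by simp
        then show "\<not> h (prod_encode (code_str (take k xs), j)) < 2"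
          using a k unfolding B_def by (metis le_add1 length_append order_trans)
      qed
    qed
    have "\<exists>X. \<forall>m. B (map X [0..<m])" by (rule konig) (erule pc, rule ex)
    then obtain X where X: "\<And>m. B (map X [0..<m])" by blast
    obtain k where "h (prod_encode (code_str (init_seg X k), j)) < 2" using H1 by blast
    with X[of k] show False unfolding B_def by (auto simp: init_seg_map)
  qed
  then obtain mf where mf: "\<And>j \<rho>. length \<rho> = mf j \<Longrightarrow> \<exists>k\<le>mf j. h (prod_encode (code_str (take k \<rho>), j)) < 2"
    by metis
  define M where "M = (\<Sum>j<n. mf j)"
  have "goodL h (s + M) n" unfolding goodL_iff
  proof (intro allI impI)
    fix X j assume j: "j < n"
    have "mf j \<le> M" unfolding M_def using j by (intro member_le_sum) auto
    obtain k where k: "k \<le> mf j" "h (prod_encode (code_str (take k (init_seg X (mf j))), j)) < 2"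
      using mf[of "init_seg X (mf j)" j] by auto
    then have "h (prod_encode (code_str (init_seg X k), j)) < 2" by (simp add: take_init_seg)
    moreover have "k < Suc (s + M)" using k(1) \<open>mf j \<le> M\<close> by simp
    ultimately show "\<exists>k<Suc (s + M). h (prod_encode (code_str (init_seg X k), j)) < 2" by blast
  qed
  then show ?thesis by blast
qed

lemma obit_eq:
  assumes g: "goodL h L n" and x: "strn L x = init_seg X L" and j: "j < n"
  shows "obit h x L j = of_bool (\<Phi> X j)"
proof -
  define k0 where "k0 = (LEAST k. okb h x k j \<or> L \<le> k)"
  obtain k where k: "k < Suc L" "h (prod_encode (code_str (init_seg X k), j)) < 2"
    using g j unfolding goodL_iff by blast
  then have ok: "okb h x k j" using okb_iff[OF x] by simp
  have "k0 \<le> k" unfolding k0_def using ok by (intro Least_le) simp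
  have "okb h x k0 j \<or> L \<le> k0" unfolding k0_def by (rule LeastI[where P = "\<lambda>k. okb h x k j \<or> L \<le> k" and k = k]) (simp add: ok)
  then have ok0: "okb h x k0 j" using \<open>k0 \<le> k\<close> k(1) ok by (metis le_antisym less_Suc_eq_le order_trans)
  have "k0 \<le> L" using \<open>k0 \<le> k\<close> k(1) by simp
  have sk: "strn k0 x = init_seg X k0" using x \<open>k0 \<le> L\<close> by (metis take_init_seg take_strn)
  have "h (prod_encode (code_str (init_seg X k0), j)) < 2" using ok0 okb_iff[OF x \<open>k0 \<le> L\<close>] by simp
  then have "h (prod_encode (code_str (init_seg X k0), j)) = of_bool (\<Phi> X j)" by (rule H2)
  then show ?thesis unfolding obit_def k0_def[symmetric] by (simp add: cstr_code sk)
qed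

lemma det:
  assumes g: "goodL h L n" and "init_seg X L = init_seg Y L"
  shows "init_seg (\<Phi> X) n = init_seg (\<Phi> Y) n"
proof -
  obtain x where x: "strn L x = init_seg X L" using strn_surj[of "init_seg X L" L] by auto
  have "\<Phi> X j = \<Phi> Y j" if "j < n" for j
    using obit_eq[OF g x that] obit_eq[OF g x[unfolded assms(2)] that] by simp
  then show ?thesis by (simp add: init_seg_map)
qed

lemma tcode_eq:
  assumes g: "goodL h L n" and x: "strn L x = init_seg X L"
  shows "tcode h x L n = code_str (init_seg (\<Phi> X) n)"
proof -
  have "tcode h x L n = code_str (map (\<lambda>j. obit h x L j = 1) [0..<n])"
    unfolding tcode_def by (rule cfun_code) (simp add: obit_eq[OF g x])
  also have "map (\<lambda>j. obit h x L j = 1) [0..<n] = init_seg (\<Phi> X) n"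
    by (simp add: obit_eq[OF g x] init_seg_map)
  finally show ?thesis .
qed

lemma goodL_Lof: "goodL h (Lof h s n) n" and Lof_ge: "s \<le> Lof h s n"
proof -
  show "goodL h (Lof h s n) n" unfolding Lof_def using totL[of s n] by (rule LeastI_ex)
  show "s \<le> Lof h s n" unfolding Lof_def by simp
qed

lemma sep_sem:
  assumes "sep h (length \<sigma>) (code_str \<sigma>) n" "init_seg X (length \<sigma>) = \<sigma>" "init_seg Y (length \<sigma>) \<noteq> \<sigma>"
  shows "init_seg (\<Phi> X) n \<noteq> init_seg (\<Phi> Y) n"
proof -
  define L where "L = Lof h (length \<sigma>) n"
  have g: "goodL h L n" and sL: "length \<sigma> \<le> L" unfolding L_def by (rule goodL_Lof, rule Lof_ge)
  obtain x where x: "x < 2 ^ L" "strn L x = init_seg X L" using strn_surj[of "init_seg X L" L] by auto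
  obtain y where y: "y < 2 ^ L" "strn L y = init_seg Y L" using strn_surj[of "init_seg Y L" L] by auto
  have "strn (length \<sigma>) x = \<sigma>" using x(2) sL assms(2) by (metis take_init_seg take_strn)
  moreover have "strn (length \<sigma>) y \<noteq> \<sigma>" using y(2) sL assms(3) by (metis take_init_seg take_strn)
  ultimately have "cstr (length \<sigma>) x = code_str \<sigma>" "cstr (length \<sigma>) y \<noteq> code_str \<sigma>"
    by (auto simp: cstr_code dest: code_str_inj)
  then have "tcode h x L n \<noteq> tcode h y L n" using assms(1) x(1) y(1) unfolding sep_def L_def by blast
  then show ?thesis using tcode_eq[OF g x(2)] tcode_eq[OF g y(2)] by auto
qed

end

locale cantor_inj = cantor_setup +
  assumes inj: "inj \<Phi>"
begin

lemma totN: "\<exists>n. \<not> valid c \<or> sep h (slen c) c n"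
proof (cases "valid c")
  case False then show ?thesis by blast
next
  case True
  then obtain \<sigma> where c: "c = code_str \<sigma>" using valid_E by blast
  define s where "s = length \<sigma>"
  have sl: "slen c = s" unfolding c s_def by (rule slen_code)
  show ?thesis
  proof (rule ccontr)
    assume "\<not> ?thesis"
    then have ns: "\<not> sep h s c n" for n using sl by auto
    have ex1: "\<exists>X Y. init_seg X s = \<sigma> \<and> init_seg Y s \<noteq> \<sigma> \<and> init_seg (\<Phi> X) n = init_seg (\<Phi> Y) n" for n
    proof -
      define L where "L = Lof h s n"
      have g: "goodL h L n" and sL: "s \<le> L" unfolding L_def by (rule goodL_Lof, rule Lof_ge)
      obtain x y where xy: "x < 2 ^ L" "y < 2 ^ L" "cstr s x = c" "cstr s y \<noteq> c" "tcode h x L n = tcode h y L n"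
        using ns[of n] unfolding sep_def L_def by blast
      define X where "X = ext (strn L x)"
      define Y where "Y = ext (strn L y)"
      have X: "strn L x = init_seg X L" and Y: "strn L y = init_seg Y L"
        unfolding X_def Y_def by (simp_all add: init_seg_ext)
      have a1: "init_seg X s = strn s x" using X sL by (metis take_init_seg take_strn)
      have a2: "init_seg Y s = strn s y" using Y sL by (metis take_init_seg take_strn)
      have a3: "strn s x = \<sigma>" using xy(3) unfolding c by (simp add: cstr_code code_str_inj)
      have a4: "strn s y \<noteq> \<sigma>" using xy(4) unfolding c by (auto simp: cstr_code)
      have a5: "init_seg (\<Phi> X) n = init_seg (\<Phi> Y) n"
        using xy(5) tcode_eq[OF g X] tcode_eq[OF g Y] by (auto dest: code_str_inj)
      show ?thesis
        by (rule exI[of _ X], rule exI[of _ Y]) (simp only: a1 a2 a3 a4 a5, simp)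
    qed
    define P where "P zs \<longleftrightarrow> (\<exists>X Y. map fst zs = init_seg X (length zs) \<and> map snd zs = init_seg Y (length zs)
        \<and> init_seg X s = \<sigma> \<and> init_seg Y s \<noteq> \<sigma> \<and> init_seg (\<Phi> X) (length zs) = init_seg (\<Phi> Y) (length zs))"
      for zs :: "(bool \<times> bool) list"
    have pc: "P (xs @ ys) \<Longrightarrow> P xs" for xs ys
    proof -
      assume "P (xs @ ys)"
      then obtain X Y where XY: "map fst (xs @ ys) = init_seg X (length (xs @ ys))"
        "map snd (xs @ ys) = init_seg Y (length (xs @ ys))" "init_seg X s = \<sigma>" "init_seg Y s \<noteq> \<sigma>"
        "init_seg (\<Phi> X) (length (xs @ ys)) = init_seg (\<Phi> Y) (length (xs @ ys))" unfolding P_def by blast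
      have "map fst xs = take (length xs) (map fst (xs @ ys))" by simp
      also have "\<dots> = init_seg X (length xs)" using XY(1) by (simp add: take_init_seg)
      finally have 1: "map fst xs = init_seg X (length xs)" .
      have "map snd xs = take (length xs) (map snd (xs @ ys))" by simp
      also have "\<dots> = init_seg Y (length xs)" using XY(2) by (simp add: take_init_seg)
      finally have 2: "map snd xs = init_seg Y (length xs)" .
      have 3: "init_seg (\<Phi> X) (length xs) = init_seg (\<Phi> Y) (length xs)"
        using XY(5) by (rule init_seg_mono) simp
      show "P xs" unfolding P_def using 1 2 3 XY(3,4) by blast
    qed
    have ex: "\<exists>zs. length zs = n \<and> P zs" for n
    proof -
      obtain X Y where XY: "init_seg X s = \<sigma>" "init_seg Y s \<noteq> \<sigma>" "init_seg (\<Phi> X) n = init_seg (\<Phi> Y) n"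
        using ex1 by blast
      define zs where "zs = zip (init_seg X n) (init_seg Y n)"
      have "length zs = n" "map fst zs = init_seg X n" "map snd zs = init_seg Y n"
        unfolding zs_def by simp_all
      then show ?thesis unfolding P_def using XY by metis
    qed
    have "\<exists>Z. \<forall>n. P (map Z [0..<n])" by (rule konig) (erule pc, rule ex)
    then obtain Z where Z: "\<And>n. P (map Z [0..<n])" by blast
    define X where "X = (\<lambda>i. fst (Z i))"
    define Y where "Y = (\<lambda>i. snd (Z i))"
    have PZ: "\<exists>X' Y'. init_seg X n = init_seg X' n \<and> init_seg Y n = init_seg Y' n \<and> init_seg X' s = \<sigma>
        \<and> init_seg Y' s \<noteq> \<sigma> \<and> init_seg (\<Phi> X') n = init_seg (\<Phi> Y') n" for n
      using Z[of n] unfolding P_def X_def Y_def by (simp add: init_seg_map)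
    have Xs: "init_seg X s = \<sigma>" using PZ[of s] by metis
    have Ys: "init_seg Y s \<noteq> \<sigma>" using PZ[of s] by metis
    have "\<Phi> X j = \<Phi> Y j" for j
    proof -
      obtain k1 where k1: "\<And>X'. init_seg X' k1 = init_seg X k1 \<Longrightarrow> \<Phi> X' j = \<Phi> X j" using cont by blast
      obtain k2 where k2: "\<And>Y'. init_seg Y' k2 = init_seg Y k2 \<Longrightarrow> \<Phi> Y' j = \<Phi> Y j" using cont by blast
      define m where "m = k1 + k2 + Suc j"
      obtain X' Y' where XY': "init_seg X m = init_seg X' m" "init_seg Y m = init_seg Y' m"
        "init_seg (\<Phi> X') m = init_seg (\<Phi> Y') m" using PZ[of m] by blast
      have "init_seg X' k1 = init_seg X k1" using XY'(1) unfolding m_def by (metis init_seg_mono le_add1)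
      moreover have "init_seg Y' k2 = init_seg Y k2" using XY'(2) unfolding m_def
        by (metis init_seg_mono le_add1 add.commute add.assoc)
      moreover have "\<Phi> X' j = \<Phi> Y' j" using XY'(3) unfolding m_def by (rule init_seg_eq_nth) simp
      ultimately show ?thesis using k1 k2 by metis
    qed
    then have "\<Phi> X = \<Phi> Y" by auto
    then have "X = Y" using inj by (simp add: inj_eq)
    then show False using Xs Ys by simp
  qed
qed

end


lemma cyl_Nil[simp]: "cyl [] = UNIV" by (simp add: cyl_def)

lemma mu_xs:
  assumes "A \<subseteq> {..<2 ^ L}"
  shows "mu (\<Union>x\<in>A. cyl (strn L x)) = card A / 2 ^ L"
proof -
  have inj: "inj_on (strn L) A" using strn_bij[of L] assms unfolding bij_betw_def by (auto intro: inj_on_subset)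
  have fin: "finite A" using assms finite_subset by blast
  have "(\<Union>x\<in>A. cyl (strn L x)) = (\<Union>\<rho>\<in>strn L ` A. cyl \<rho>)" by simp
  also have "mu \<dots> = card (strn L ` A) / 2 ^ L" by (rule mu_union) (use fin in auto)
  also have "card (strn L ` A) = card A" using inj by (simp add: card_image)
  finally show ?thesis .
qed

lemma sets_UN_cyl: "finite A \<Longrightarrow> (\<Union>x\<in>A. cyl (strn L x)) \<in> sets cantor"
  by (intro sets.finite_UN) auto

lemma sum_len_Suc:
  fixes f :: "bool list \<Rightarrow> real"
  shows "(\<Sum>\<tau>\<in>{\<tau>. length \<tau> = Suc m}. f \<tau>) = (\<Sum>\<tau>\<in>{\<tau>. length \<tau> = m}. f (\<tau> @ [False]) + f (\<tau> @ [True]))"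
proof -
  have e: "{\<tau> :: bool list. length \<tau> = Suc m} = (\<lambda>\<tau>. \<tau> @ [False]) ` {\<tau>. length \<tau> = m} \<union> (\<lambda>\<tau>. \<tau> @ [True]) ` {\<tau>. length \<tau> = m}"
  proof (rule set_eqI, rule iffI)
    fix \<tau> :: "bool list" assume "\<tau> \<in> {\<tau>. length \<tau> = Suc m}"
    then have ne: "\<tau> \<noteq> []" by auto
    then have "\<tau> = butlast \<tau> @ [last \<tau>]" by simp
    moreover have "length (butlast \<tau>) = m" using \<open>\<tau> \<in> {\<tau>. length \<tau> = Suc m}\<close> by simp
    ultimately have "\<tau> = butlast \<tau> @ [last \<tau>]" "length (butlast \<tau>) = m" by auto
    then show "\<tau> \<in> (\<lambda>\<tau>. \<tau> @ [False]) ` {\<tau>. length \<tau> = m} \<union> (\<lambda>\<tau>. \<tau> @ [True]) ` {\<tau>. length \<tau> = m}"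
      by (cases "last \<tau>") (metis (mono_tags, lifting) UnI1 UnI2 image_eqI mem_Collect_eq)+
  qed auto
  have "(\<Sum>\<tau>\<in>{\<tau>. length \<tau> = Suc m}. f \<tau>) = (\<Sum>\<tau>\<in>(\<lambda>\<tau>. \<tau> @ [False]) ` {\<tau>. length \<tau> = m}. f \<tau>) + (\<Sum>\<tau>\<in>(\<lambda>\<tau>. \<tau> @ [True]) ` {\<tau>. length \<tau> = m}. f \<tau>)"
    unfolding e by (rule sum.union_disjoint) (auto simp: finite_len)
  also have "\<dots> = (\<Sum>\<tau>\<in>{\<tau>. length \<tau> = m}. f (\<tau> @ [False])) + (\<Sum>\<tau>\<in>{\<tau>. length \<tau> = m}. f (\<tau> @ [True]))"
    by (subst sum.reindex, simp add: inj_on_def)+ simp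
  finally show ?thesis by (simp add: sum.distrib)
qed

context cantor_setup
begin

lemma U:
  assumes g: "goodL h L m" and t: "length \<tau> = m" and s: "length \<sigma> \<le> L"
  shows "cyl \<sigma> \<inter> \<Phi> -` cyl \<tau> = (\<Union>x\<in>{x. x < 2 ^ L \<and> strn (length \<sigma>) x = \<sigma> \<and> init_seg (\<Phi> (ext (strn L x))) m = \<tau>}. cyl (strn L x))"
proof (rule set_eqI, rule iffI)
  fix X assume X: "X \<in> cyl \<sigma> \<inter> \<Phi> -` cyl \<tau>"
  obtain x where x: "x < 2 ^ L" "strn L x = init_seg X L" using strn_surj[of "init_seg X L" L] by auto
  have e: "init_seg (ext (strn L x)) L = init_seg X L" using x by (simp add: init_seg_ext)
  have "strn (length \<sigma>) x = \<sigma>" using X x(2) s by (metis IntD1 cyl_iff take_init_seg take_strn)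
  moreover have "init_seg (\<Phi> (ext (strn L x))) m = \<tau>" using det[OF g e] X t by (simp add: cyl_iff)
  moreover have "X \<in> cyl (strn L x)" using x by (simp add: cyl_iff)
  ultimately show "X \<in> (\<Union>x\<in>{x. x < 2 ^ L \<and> strn (length \<sigma>) x = \<sigma> \<and> init_seg (\<Phi> (ext (strn L x))) m = \<tau>}. cyl (strn L x))"
    using x(1) by blast
next
  fix X assume "X \<in> (\<Union>x\<in>{x. x < 2 ^ L \<and> strn (length \<sigma>) x = \<sigma> \<and> init_seg (\<Phi> (ext (strn L x))) m = \<tau>}. cyl (strn L x))"
  then obtain x where x: "strn (length \<sigma>) x = \<sigma>" "init_seg (\<Phi> (ext (strn L x))) m = \<tau>" "X \<in> cyl (strn L x)"
    by blast
  have XL: "init_seg X L = strn L x" using x(3) by (simp add: cyl_iff)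
  have e: "init_seg (ext (strn L x)) L = init_seg X L" using XL by (simp add: init_seg_ext)
  have "init_seg X (length \<sigma>) = \<sigma>" using XL x(1) s by (metis take_init_seg take_strn)
  moreover have "init_seg (\<Phi> X) m = \<tau>" using det[OF g e] x(2) by simp
  ultimately show "X \<in> cyl \<sigma> \<inter> \<Phi> -` cyl \<tau>" using t by (simp add: cyl_iff)
qed

lemma goodL_0: "goodL h L 0" by (simp add: goodL_def)

lemma preimage_sets: "\<Phi> -` cyl \<tau> \<in> sets cantor"
proof -
  obtain L where g: "goodL h (0 + L) (length \<tau>)" using totL by blast
  have "\<Phi> -` cyl \<tau> = cyl [] \<inter> \<Phi> -` cyl \<tau>" by simp
  also have "\<dots> = (\<Union>x\<in>{x. x < 2 ^ L \<and> strn (length []) x = [] \<and> init_seg (\<Phi> (ext (strn L x))) (length \<tau>) = \<tau>}. cyl (strn L x))"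
    using U[of L "length \<tau>" \<tau> "[]"] g by simp
  finally have e: "\<Phi> -` cyl \<tau> = (\<Union>x\<in>{x. x < 2 ^ L \<and> strn (length []) x = [] \<and> init_seg (\<Phi> (ext (strn L x))) (length \<tau>) = \<tau>}. cyl (strn L x))" .
  show ?thesis by (subst e, rule sets_UN_cyl, simp)
qed

end

locale cantor_mart = cantor_inj +
  fixes b :: "bool list \<Rightarrow> real"
  assumes mart: "Phi_martingale \<Phi> b"
begin

lemma b_nonneg: "b \<tau> \<ge> 0" using mart unfolding Phi_martingale_def by blast

definition NN :: "bool list \<Rightarrow> nat" where "NN \<sigma> = Nof h (code_str \<sigma>)"
definition LL :: "bool list \<Rightarrow> nat" where "LL \<sigma> = Lc h (code_str \<sigma>)"
definition gg :: "bool list \<Rightarrow> nat \<Rightarrow> bool list" where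
  "gg \<sigma> x = init_seg (\<Phi> (ext (strn (LL \<sigma>) x))) (NN \<sigma>)"
definition XS :: "bool list \<Rightarrow> nat set" where
  "XS \<sigma> = {x. x < 2 ^ LL \<sigma> \<and> strn (length \<sigma>) x = \<sigma>}"
definition bb :: "bool list \<Rightarrow> real" where
  "bb \<sigma> = (\<Sum>x\<in>XS \<sigma>. b (gg \<sigma> x)) / 2 ^ (LL \<sigma> - length \<sigma>)"
definition FF :: "bool list \<Rightarrow> nat \<Rightarrow> real" where
  "FF \<sigma> m = (\<Sum>\<tau>\<in>{\<tau>. length \<tau> = m}. b \<tau> * mu (cyl \<sigma> \<inter> \<Phi> -` cyl \<tau>))"

lemma LL_eq: "LL \<sigma> = Lof h (length \<sigma>) (NN \<sigma>)"
  unfolding LL_def Lc_def NN_def slen_code ..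

lemma sepN: "sep h (length \<sigma>) (code_str \<sigma>) (NN \<sigma>)"
proof -
  have "\<not> valid (code_str \<sigma>) \<or> sep h (slen (code_str \<sigma>)) (code_str \<sigma>) (NN \<sigma>)"
    unfolding NN_def Nof_def using totN by (rule LeastI_ex)
  then show ?thesis using valid_code by (simp add: slen_code)
qed

lemma goodLL: "goodL h (LL \<sigma>) (NN \<sigma>)" and LL_ge: "length \<sigma> \<le> LL \<sigma>"
  unfolding LL_eq by (rule goodL_Lof, rule Lof_ge)

lemma XS_sub: "XS \<sigma> \<subseteq> {..<2 ^ LL \<sigma>}" unfolding XS_def by auto
lemma XS_fin: "finite (XS \<sigma>)" using XS_sub finite_subset by blast

lemma sep_m:
  assumes "NN \<sigma> \<le> m" "init_seg X (length \<sigma>) = \<sigma>" "init_seg Y (length \<sigma>) \<noteq> \<sigma>"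
  shows "init_seg (\<Phi> X) m \<noteq> init_seg (\<Phi> Y) m"
  using sep_sem[OF sepN assms(2,3)] init_seg_mono assms(1) by blast

lemma FF_step:
  assumes "NN \<sigma> \<le> m"
  shows "FF \<sigma> (Suc m) = FF \<sigma> m"
proof -
  have *: "b (\<tau> @ [False]) * mu (cyl \<sigma> \<inter> \<Phi> -` cyl (\<tau> @ [False])) + b (\<tau> @ [True]) * mu (cyl \<sigma> \<inter> \<Phi> -` cyl (\<tau> @ [True]))
      = b \<tau> * mu (cyl \<sigma> \<inter> \<Phi> -` cyl \<tau>)" if t: "length \<tau> = m" for \<tau>
  proof -
    have sub: "cyl (\<tau> @ [c]) \<subseteq> cyl \<tau>" for c using cyl_append_split[of \<tau>] by (cases c) auto
    show ?thesis
    proof (cases "cyl \<sigma> \<inter> \<Phi> -` cyl \<tau> = {}")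
      case True
      then have "cyl \<sigma> \<inter> \<Phi> -` cyl (\<tau> @ [c]) = {}" for c using sub[of c] by blast
      then show ?thesis using True by (simp add: mu_def)
    next
      case False
      then obtain X where X: "X \<in> cyl \<sigma>" "X \<in> \<Phi> -` cyl \<tau>" by blast
      have A: "\<Phi> -` cyl \<tau> \<subseteq> cyl \<sigma>"
      proof
        fix Y assume Y: "Y \<in> \<Phi> -` cyl \<tau>"
        show "Y \<in> cyl \<sigma>"
        proof (rule ccontr)
          assume "Y \<notin> cyl \<sigma>"
          then have "init_seg Y (length \<sigma>) \<noteq> \<sigma>" by (simp add: cyl_iff)
          moreover have "init_seg X (length \<sigma>) = \<sigma>" using X by (simp add: cyl_iff)
          moreover have "init_seg (\<Phi> X) m = init_seg (\<Phi> Y) m" using X Y t by (simp add: cyl_iff)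
          ultimately show False using sep_m[OF assms] by blast
        qed
      qed
      then have "cyl \<sigma> \<inter> \<Phi> -` cyl (\<tau> @ [c]) = \<Phi> -` cyl (\<tau> @ [c])" for c using sub[of c] by blast
      moreover have "cyl \<sigma> \<inter> \<Phi> -` cyl \<tau> = \<Phi> -` cyl \<tau>" using A by blast
      moreover have mt: "b \<tau> * mu (\<Phi> -` cyl \<tau>) = b (\<tau> @ [False]) * mu (\<Phi> -` cyl (\<tau> @ [False])) + b (\<tau> @ [True]) * mu (\<Phi> -` cyl (\<tau> @ [True]))"
        using mart unfolding Phi_martingale_def by blast
      ultimately show ?thesis by (simp only:)
    qed
  qed
  show ?thesis unfolding FF_def sum_len_Suc by (rule sum.cong) (simp_all add: *)
qed

lemma FF_const: "NN \<sigma> \<le> m \<Longrightarrow> FF \<sigma> m = FF \<sigma> (NN \<sigma>)"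
proof (induction m rule: dec_induct)
  case (step m) then show ?case using FF_step[of \<sigma> m] by simp
qed simp

lemma FF_N: "FF \<sigma> (NN \<sigma>) = (\<Sum>x\<in>XS \<sigma>. b (gg \<sigma> x)) / 2 ^ LL \<sigma>"
proof -
  let ?T = "{\<tau> :: bool list. length \<tau> = NN \<sigma>}"
  have m: "mu (cyl \<sigma> \<inter> \<Phi> -` cyl \<tau>) = card {x \<in> XS \<sigma>. gg \<sigma> x = \<tau>} / 2 ^ LL \<sigma>" if "\<tau> \<in> ?T" for \<tau>
  proof -
    have "cyl \<sigma> \<inter> \<Phi> -` cyl \<tau> = (\<Union>x\<in>{x \<in> XS \<sigma>. gg \<sigma> x = \<tau>}. cyl (strn (LL \<sigma>) x))"
      using U[OF goodLL _ LL_ge, of \<tau>] that unfolding XS_def gg_def by (simp add: conj_assoc)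
    moreover have "{x \<in> XS \<sigma>. gg \<sigma> x = \<tau>} \<subseteq> {..<2 ^ LL \<sigma>}" using XS_sub[of \<sigma>] by blast
    ultimately show ?thesis using mu_xs[of "{x \<in> XS \<sigma>. gg \<sigma> x = \<tau>}" "LL \<sigma>"] by simp
  qed
  have "FF \<sigma> (NN \<sigma>) = (\<Sum>\<tau>\<in>?T. (\<Sum>x\<in>{x \<in> XS \<sigma>. gg \<sigma> x = \<tau>}. b (gg \<sigma> x)) / 2 ^ LL \<sigma>)"
    unfolding FF_def
  proof (rule sum.cong)
    fix \<tau> assume t: "\<tau> \<in> ?T"
    have "(\<Sum>x\<in>{x \<in> XS \<sigma>. gg \<sigma> x = \<tau>}. b (gg \<sigma> x)) = card {x \<in> XS \<sigma>. gg \<sigma> x = \<tau>} * b \<tau>" by simp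
    then show "b \<tau> * mu (cyl \<sigma> \<inter> \<Phi> -` cyl \<tau>) = (\<Sum>x\<in>{x \<in> XS \<sigma>. gg \<sigma> x = \<tau>}. b (gg \<sigma> x)) / 2 ^ LL \<sigma>"
      using m[OF t] by simp
  qed simp
  also have "\<dots> = (\<Sum>\<tau>\<in>?T. (\<Sum>x\<in>{x \<in> XS \<sigma>. gg \<sigma> x = \<tau>}. b (gg \<sigma> x))) / 2 ^ LL \<sigma>"
    by (simp add: sum_divide_distrib)
  also have "(\<Sum>\<tau>\<in>?T. (\<Sum>x\<in>{x \<in> XS \<sigma>. gg \<sigma> x = \<tau>}. b (gg \<sigma> x))) = (\<Sum>x\<in>XS \<sigma>. b (gg \<sigma> x))"
    by (rule sum.group) (auto simp: XS_fin finite_len gg_def)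
  finally show ?thesis .
qed

lemma bb_eq: "bb \<sigma> = FF \<sigma> (NN \<sigma>) / mu (cyl \<sigma>)"
proof -
  have "(2::real) ^ LL \<sigma> = 2 ^ (LL \<sigma> - length \<sigma>) * 2 ^ length \<sigma>"
    using LL_ge[of \<sigma>] by (simp add: power_add[symmetric])
  then show ?thesis unfolding FF_N bb_def mu_cyl by (simp add: field_simps)
qed

lemma limit: "(\<lambda>n. \<Sum>\<tau>\<in>{\<tau>. length \<tau> = n}. b \<tau> * (mu (cyl \<sigma> \<inter> \<Phi> -` cyl \<tau>) / mu (cyl \<sigma>))) \<longlonglongrightarrow> bb \<sigma>"
proof (rule tendsto_eventually)
  show "\<forall>\<^sub>F n in sequentially. (\<Sum>\<tau>\<in>{\<tau>. length \<tau> = n}. b \<tau> * (mu (cyl \<sigma> \<inter> \<Phi> -` cyl \<tau>) / mu (cyl \<sigma>))) = bb \<sigma>"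
    unfolding eventually_sequentially
  proof (intro exI allI impI)
    fix n assume "NN \<sigma> \<le> n"
    have "(\<Sum>\<tau>\<in>{\<tau>. length \<tau> = n}. b \<tau> * (mu (cyl \<sigma> \<inter> \<Phi> -` cyl \<tau>) / mu (cyl \<sigma>))) = FF \<sigma> n / mu (cyl \<sigma>)"
      unfolding FF_def by (simp add: sum_divide_distrib)
    also have "\<dots> = bb \<sigma>" using FF_const[OF \<open>NN \<sigma> \<le> n\<close>] bb_eq by simp
    finally show "(\<Sum>\<tau>\<in>{\<tau>. length \<tau> = n}. b \<tau> * (mu (cyl \<sigma> \<inter> \<Phi> -` cyl \<tau>) / mu (cyl \<sigma>))) = bb \<sigma>" .
  qed
qed

lemma bb_mart: "martingale bb"
  unfolding martingale_def
proof (intro conjI allI)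
  fix \<sigma>
  show "0 \<le> bb \<sigma>" unfolding bb_def by (intro divide_nonneg_nonneg sum_nonneg b_nonneg) simp
  define S where "S \<sigma> n = (\<Sum>\<tau>\<in>{\<tau>. length \<tau> = n}. b \<tau> * (mu (cyl \<sigma> \<inter> \<Phi> -` cyl \<tau>) / mu (cyl \<sigma>)))" for \<sigma> n
  have "S (\<sigma> @ [False]) n + S (\<sigma> @ [True]) n = 2 * S \<sigma> n" for n
  proof -
    have "S (\<sigma> @ [False]) n + S (\<sigma> @ [True]) n =
      (\<Sum>\<tau>\<in>{\<tau>. length \<tau> = n}. b \<tau> * (mu (cyl (\<sigma> @ [False]) \<inter> \<Phi> -` cyl \<tau>) + mu (cyl (\<sigma> @ [True]) \<inter> \<Phi> -` cyl \<tau>)) * 2 ^ Suc (length \<sigma>))"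
      unfolding S_def mu_cyl by (simp add: sum.distrib[symmetric] algebra_simps)
    also have "\<dots> = (\<Sum>\<tau>\<in>{\<tau>. length \<tau> = n}. b \<tau> * mu (cyl \<sigma> \<inter> \<Phi> -` cyl \<tau>) * 2 ^ Suc (length \<sigma>))"
      by (simp add: mu_split[OF preimage_sets, symmetric])
    also have "\<dots> = 2 * S \<sigma> n"
      unfolding S_def mu_cyl by (simp add: sum_distrib_left algebra_simps)
    finally show ?thesis .
  qed
  moreover have "(\<lambda>n. S (\<sigma> @ [False]) n + S (\<sigma> @ [True]) n) \<longlonglongrightarrow> bb (\<sigma> @ [False]) + bb (\<sigma> @ [True])"
    unfolding S_def by (intro tendsto_add limit)
  ultimately have l1: "(\<lambda>n. 2 * S \<sigma> n) \<longlonglongrightarrow> bb (\<sigma> @ [False]) + bb (\<sigma> @ [True])" by simp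
  have l2: "(\<lambda>n. 2 * S \<sigma> n) \<longlonglongrightarrow> 2 * bb \<sigma>"
    unfolding S_def by (intro tendsto_mult_left limit)
  show "bb (\<sigma> @ [False]) + bb (\<sigma> @ [True]) = 2 * bb \<sigma>"
    using LIMSEQ_unique[OF l1 l2] .
qed

end


lemma div_bounds:
  assumes "0 < n"
  shows "real (m div n) \<le> real m / real n" "real m / real n < real (m div n) + 1"
proof -
  have e: "real m = real n * real (m div n) + real (m mod n)"
    by (metis of_nat_add of_nat_mult mult_div_mod_eq)
  have r: "real (m mod n) < real n" using assms by simp
  have n: "0 < real n" using assms by simp
  show "real (m div n) \<le> real m / real n" using e n by (simp add: pos_le_divide_eq)
  show "real m / real n < real (m div n) + 1" using e r n by (simp add: pos_divide_less_eq algebra_simps)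
qed

lemma rat_decode_pe: "rat_decode (prod_encode (2 * D, 2 ^ e - 1)) = real D / 2 ^ e"
proof -
  have "int_decode (2 * D) = int D" by (simp add: int_decode_def sum_decode_def)
  moreover have "Suc (2 ^ e - 1) = (2::nat) ^ e" by simp
  ultimately show ?thesis unfolding rat_decode_def by simp
qed

lemma rat_decode_split: "rat_decode r = of_int (int_decode (pfst r)) / real (Suc (psnd r))"
  unfolding rat_decode_def by (simp add: case_prod_beta)

lemma dval_approx:
  assumes ap: "\<And>k'. \<bar>rat_decode (ab (prod_encode (t, k'))) - \<beta>\<bar> \<le> 1 / 2 ^ k'" and b0: "\<beta> \<ge> 0"
  shows "\<bar>real (dval ab t k) / 2 ^ Suc k - \<beta>\<bar> \<le> 1 / 2 ^ k"
proof -
  define r where "r = ab (prod_encode (t, Suc k))"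
  define a where "a = pfst r"
  define D where "D = Suc (psnd r)"
  define q where "q = of_int (int_decode a) / real D"
  define u where "u = (if even a then a div 2 else 0)"
  have q: "\<bar>q - \<beta>\<bar> \<le> 1 / 2 ^ Suc k" using ap[of "Suc k"] unfolding q_def a_def D_def r_def rat_decode_split .
  have Dp: "0 < D" "0 < real D" unfolding D_def by simp_all
  have uq: "\<bar>real u / real D - \<beta>\<bar> \<le> \<bar>q - \<beta>\<bar>"
  proof (cases "even a")
    case True
    then have "int_decode a = int (a div 2)" by (simp add: int_decode_def sum_decode_def)
    then show ?thesis using True unfolding q_def u_def by simp
  next
    case False
    then have "int_decode a = - int (a div 2) - 1" by (simp add: int_decode_def sum_decode_def)
    then have "q < 0" unfolding q_def using Dp by (simp add: divide_neg_pos)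
    then show ?thesis using False b0 unfolding u_def by simp
  qed
  have dv: "dval ab t k = u * 2 ^ Suc k div D"
    unfolding dval_def u_def D_def a_def r_def ..
  have d1: "real (dval ab t k) \<le> real (u * 2 ^ Suc k) / real D"
    unfolding dv by (rule div_bounds(1)[OF Dp(1)])
  have d2: "real (u * 2 ^ Suc k) / real D < real (dval ab t k) + 1"
    unfolding dv by (rule div_bounds(2)[OF Dp(1)])
  have p: "(0::real) < 2 ^ Suc k" by simp
  have "real (dval ab t k) / 2 ^ Suc k \<le> real u / real D"
    using d1 p Dp by (simp add: divide_le_eq field_simps)
  moreover have "real u / real D < real (dval ab t k) / 2 ^ Suc k + 1 / 2 ^ Suc k"
    using d2 p Dp by (simp add: field_simps)
  ultimately have "\<bar>real (dval ab t k) / 2 ^ Suc k - real u / real D\<bar> \<le> 1 / 2 ^ Suc k" by linarith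
  then have "\<bar>real (dval ab t k) / 2 ^ Suc k - \<beta>\<bar> \<le> 1 / 2 ^ Suc k + 1 / 2 ^ Suc k"
    using uq q by linarith
  then show ?thesis by simp
qed

context cantor_mart
begin

lemma card_XS: "real (card (XS \<sigma>)) = 2 ^ (LL \<sigma> - length \<sigma>)"
proof -
  have "cyl \<sigma> = cyl \<sigma> \<inter> \<Phi> -` cyl []" by simp
  also have "\<dots> = (\<Union>x\<in>{x. x < 2 ^ LL \<sigma> \<and> strn (length \<sigma>) x = \<sigma> \<and> init_seg (\<Phi> (ext (strn (LL \<sigma>) x))) 0 = []}. cyl (strn (LL \<sigma>) x))"
    by (rule U[OF goodL_0 _ LL_ge]) simp
  also have "{x. x < 2 ^ LL \<sigma> \<and> strn (length \<sigma>) x = \<sigma> \<and> init_seg (\<Phi> (ext (strn (LL \<sigma>) x))) 0 = []} = XS \<sigma>"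
    unfolding XS_def by (simp add: init_seg_def)
  finally have "mu (cyl \<sigma>) = card (XS \<sigma>) / 2 ^ LL \<sigma>" using mu_xs[OF XS_sub] by simp
  then have "real (card (XS \<sigma>)) = 2 ^ LL \<sigma> / 2 ^ length \<sigma>" by (simp add: mu_cyl field_simps)
  also have "\<dots> = 2 ^ (LL \<sigma> - length \<sigma>)" using LL_ge[of \<sigma>] by (simp add: power_diff)
  finally show ?thesis .
qed

lemma approx:
  assumes ap: "\<And>\<tau> k. \<bar>rat_decode (ab (prod_encode (code_str \<tau>, k))) - b \<tau>\<bar> \<le> 1 / 2 ^ k"
  shows "\<bar>rat_decode (alg h ab (prod_encode (code_str \<sigma>, k))) - bb \<sigma>\<bar> \<le> 1 / 2 ^ k"
proof -
  define c where "c = code_str \<sigma>"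
  define s where "s = length \<sigma>"
  define L where "L = LL \<sigma>"
  define N where "N = NN \<sigma>"
  have sl: "slen c = s" unfolding c_def s_def by (rule slen_code)
  have Lc: "Lc h c = L" unfolding L_def LL_def c_def ..
  have Nc: "Nof h c = N" unfolding N_def NN_def c_def ..
  have tc: "tcode h x L N = code_str (gg \<sigma> x)" for x
  proof -
    have "strn L x = init_seg (ext (strn L x)) L" by (simp add: init_seg_ext)
    from tcode_eq[OF _ this] show ?thesis unfolding gg_def L_def N_def using goodLL by simp
  qed
  have XSe: "{x \<in> {..<2 ^ L}. cstr s x = c} = XS \<sigma>"
    unfolding XS_def L_def s_def c_def by (auto simp: cstr_code dest: code_str_inj)
  have "Dsum h ab c k = (\<Sum>x<2 ^ L. if cstr s x = c then dval ab (tcode h x L N) k else 0)"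
    unfolding Dsum_def Lc Nc sl ..
  also have "\<dots> = (\<Sum>x\<in>{x \<in> {..<2 ^ L}. cstr s x = c}. dval ab (tcode h x L N) k)"
    by (rule sum.inter_filter[symmetric]) simp
  also have "\<dots> = (\<Sum>x\<in>XS \<sigma>. dval ab (code_str (gg \<sigma> x)) k)" unfolding XSe tc ..
  finally have Ds: "Dsum h ab c k = (\<Sum>x\<in>XS \<sigma>. dval ab (code_str (gg \<sigma> x)) k)" .
  define e where "e = Suc k + (L - s)"
  have av: "alg h ab (prod_encode (c, k)) = prod_encode (2 * Dsum h ab c k, 2 ^ e - 1)"
    unfolding alg_def e_def by (simp add: Lc sl)
  have pe: "(2::real) ^ e = 2 ^ Suc k * 2 ^ (L - s)" unfolding e_def by (simp add: power_add)
  define Z where "Z = (\<Sum>x\<in>XS \<sigma>. real (dval ab (code_str (gg \<sigma> x)) k) / 2 ^ Suc k - b (gg \<sigma> x))"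
  have eq: "rat_decode (alg h ab (prod_encode (c, k))) - bb \<sigma> = Z / 2 ^ (L - s)"
    unfolding av rat_decode_pe Ds bb_def L_def[symmetric] s_def[symmetric] pe Z_def
    by (simp add: sum_subtractf sum_divide_distrib[symmetric] diff_divide_distrib)
  have "\<bar>Z\<bar> \<le> (\<Sum>x\<in>XS \<sigma>. 1 / 2 ^ k)"
    unfolding Z_def by (intro order.trans[OF sum_abs] sum_mono dval_approx ap b_nonneg)
  then have "\<bar>Z\<bar> / 2 ^ (L - s) \<le> (\<Sum>x\<in>XS \<sigma>. 1 / 2 ^ k) / 2 ^ (L - s)"
    by (rule divide_right_mono) simp
  also have "\<dots> = 1 / 2 ^ k" using card_XS[of \<sigma>] unfolding L_def s_def by simp
  finally have "\<bar>Z / 2 ^ (L - s)\<bar> \<le> 1 / 2 ^ k" by (simp add: abs_divide)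
  then show ?thesis unfolding c_def[symmetric] eq .
qed

end

theorem lemmaL3:
  fixes \<Phi> :: "(nat \<Rightarrow> bool) \<Rightarrow> (nat \<Rightarrow> bool)" and b :: "bool list \<Rightarrow> real"
  assumes "computable_cantor \<Phi>" and "inj \<Phi>"
    and "Phi_martingale \<Phi> b" and "computable_strfun b"
  shows "\<exists>b'. (\<forall>\<sigma>. (\<lambda>n. \<Sum>\<tau>\<in>{\<tau>. length \<tau> = n}. b \<tau> * (mu (cyl \<sigma> \<inter> \<Phi> -` cyl \<tau>) / mu (cyl \<sigma>)))
                     \<longlonglongrightarrow> b' \<sigma>)
             \<and> martingale b' \<and> computable_strfun b'"
proof -
  obtain h where hc: "computable_nat h" and hp: "\<And>X n. (\<exists>k. h (prod_encode (code_str (init_seg X k), n)) < 2) \<and>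
            (\<forall>k. h (prod_encode (code_str (init_seg X k), n)) < 2 \<longrightarrow>
                 h (prod_encode (code_str (init_seg X k), n)) = of_bool (\<Phi> X n))"
    using assms(1) unfolding computable_cantor_def by blast
  obtain ab where abc: "computable_nat ab"
    and ap: "\<And>\<tau> k. \<bar>rat_decode (ab (prod_encode (code_str \<tau>, k))) - b \<tau>\<bar> \<le> 1 / 2 ^ k"
    using assms(4) unfolding computable_strfun_def by blast
  interpret cantor_mart \<Phi> h b
    by unfold_locales (use hp assms(2,3) in auto)
  have "computable_strfun bb"
    unfolding computable_strfun_def
  proof (intro exI conjI allI)
    show "computable_nat (alg h ab)" by (rule C_alg[OF hc totL totN abc])
    fix \<tau> k show "\<bar>rat_decode (alg h ab (prod_encode (code_str \<tau>, k))) - bb \<tau>\<bar> \<le> 1 / 2 ^ k"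
      by (rule approx[OF ap])
  qed
  then show ?thesis using limit bb_mart by blast
qed

end
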